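(* (1) Let $\alpha_1,\ldots,\alpha_m\in(0,1)$ with $\sum_{i=1}^m\alpha_i<1$. An integrable function $f:[0,1]^m\to\mathbb{C}$ satisfies $\int_{A_1\times\cdots\times A_m}f=0$ for all pairwise disjoint measurable $A_1,\ldots,A_m\subseteq[0,1]$ with $\lambda(A_i)=\alpha_i$ if and only if $f=0$ almost everywhere. (2) The same equivalence holds if instead $f$ is symmetric (invariant under all permutations of its $m$ coordinates), $\sum_{i=1}^m\alpha_i=1$, and $(\alpha_1,\ldots,\alpha_m)\ne(1/m,\ldots,1/m)$.
   Context: $\lambda$ denotes Lebesgue measure on $[0,1]$. *)

theory Defs
  imports "HOL-Analysis.Analysis" "HOL-Combinatorics.Permutations"
begin

definition unit_cube :: "nat \<Rightarrow> (nat \<Rightarrow> real) measure" where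
  "unit_cube m = PiM {..<m} (\<lambda>_. lebesgue_on {0..1})"

definition vanishes_on_disjoint_boxes ::
    "nat \<Rightarrow> (nat \<Rightarrow> real) \<Rightarrow> ((nat \<Rightarrow> real) \<Rightarrow> complex) \<Rightarrow> bool" where
  "vanishes_on_disjoint_boxes m \<alpha> f \<longleftrightarrow>
     (\<forall>A :: nat \<Rightarrow> real set.
        (\<forall>i<m. A i \<in> sets (lebesgue_on {0..1}) \<and> measure (lebesgue_on {0..1}) (A i) = \<alpha> i) \<and>
        (\<forall>i<m. \<forall>j<m. i \<noteq> j \<longrightarrow> A i \<inter> A j = {}) \<longrightarrow>
        (\<integral>x\<in>(\<Pi>\<^sub>E i\<in>{..<m}. A i). f x \<partial>unit_cube m) = 0)"

end

theory Submission
  imports Defs "HOL-Probability.Probability"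
begin

abbreviation LL where "LL \<equiv> lebesgue_on {0..1::real}"
abbreviation lam where "lam A \<equiv> measure LL A"

lemma sets_LL_iff: "A \<in> sets LL \<longleftrightarrow> A \<subseteq> {0..1} \<and> A \<in> sets lebesgue"
  by (simp add: sets_restrict_space_iff)

lemma measure_LL: "A \<in> sets LL \<Longrightarrow> lam A = measure lebesgue A"
  by (simp add: measure_restrict_space sets_LL_iff)

lemma prob_LL: "prob_space LL"
  by (rule prob_spaceI) (simp add: emeasure_restrict_space)

interpretation LLp: prob_space LL by (rule prob_LL)

lemma LL_sub: "A \<in> sets LL \<Longrightarrow> A \<subseteq> {0..1}"
  by (simp add: sets_LL_iff)

lemma LL_fmeas: "A \<in> sets LL \<Longrightarrow> A \<in> lmeasurable"
  using fmeasurableI2[OF lmeasurable_interval(1)[of 0 1], of A] by (simp add: sets_LL_iff)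

lemma Icc_leb_measure: "x \<le> y \<Longrightarrow> measure lebesgue {x..y::real} = y - x"
  by (simp add: measure_completion)

lemma LL_Int_borel: "A \<in> sets LL \<Longrightarrow> B \<in> sets borel \<Longrightarrow> A \<inter> B \<in> sets LL"
proof -
  assume "A \<in> sets LL" "B \<in> sets borel"
  then have "B \<in> sets lebesgue" by (simp add: sets_completionI_sets)
  with \<open>A \<in> sets LL\<close> show ?thesis by (auto simp: sets_LL_iff)
qed

lemma LL_Int_atMost: "A \<in> sets LL \<Longrightarrow> A \<inter> {..x} \<in> sets LL"
  by (simp add: LL_Int_borel)

lemma lam_le_Icc: "A \<in> sets LL \<Longrightarrow> A \<subseteq> {x..y} \<Longrightarrow> x \<le> y \<Longrightarrow> lam A \<le> y - x"
  by (metis Icc_leb_measure LL_fmeas fmeasurableD lmeasurable_interval(1) measure_LL measure_mono_fmeasurable)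

lemma nonatomic:
  assumes S: "S \<in> sets LL" and t: "0 \<le> t" "t \<le> lam S"
  shows "\<exists>B\<in>sets LL. B \<subseteq> S \<and> lam B = t"
proof -
  define F where "F x = lam (S \<inter> {..x})" for x
  have lip: "F y - F x \<le> y - x" if "x \<le> y" for x y
  proof -
    have "S \<inter> {..y} = (S \<inter> {..x}) \<union> (S \<inter> {x<..y})" using that by auto
    moreover have I: "S \<inter> {x<..y} \<in> sets LL"
      using S by (simp add: LL_Int_borel)
    ultimately have "F y = F x + lam (S \<inter> {x<..y})"
      unfolding F_def by (subst LLp.finite_measure_Union[symmetric]) (auto simp: LL_Int_atMost S)
    moreover have "lam (S \<inter> {x<..y}) \<le> y - x"
      using I that by (intro lam_le_Icc) auto
    ultimately show ?thesis using that by simp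
  qed
  have mono: "F x \<le> F y" if "x \<le> y" for x y
    unfolding F_def using that S
    by (intro LLp.finite_measure_mono) (auto simp: LL_Int_atMost)
  have "continuous_on {0..1} F"
  proof (rule continuous_onI)
    fix x :: real and e :: real assume "x \<in> {0..1}" "0 < e"
    show "\<exists>d>0. \<forall>x'\<in>{0..1}. dist x' x < d \<longrightarrow> dist (F x') (F x) \<le> e"
    proof (intro exI[of _ e] conjI ballI impI)
      fix x' :: real assume "dist x' x < e"
      then show "dist (F x') (F x) \<le> e"
        using lip[of x x'] lip[of x' x] mono[of x x'] mono[of x' x]
        by (cases "x \<le> x'") (auto simp: dist_real_def abs_if)
    qed (use \<open>0<e\<close> in auto)
  qed
  moreover have "F 0 \<le> t"
  proof -
    have "S \<inter> {..0} \<subseteq> {0..0}" using LL_sub[OF S] by auto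
    then have "F 0 \<le> 0" unfolding F_def using lam_le_Icc[of "S \<inter> {..0}" 0 0] LL_Int_atMost[OF S] by simp
    then show ?thesis using t by simp
  qed
  moreover have "t \<le> F 1"
    unfolding F_def using t LL_sub[OF S] by (simp add: Int_absorb2 subset_eq)
  ultimately obtain x where "0 \<le> x" "x \<le> 1" "F x = t"
    using IVT'[of F 0 t 1] by auto
  then show ?thesis unfolding F_def using LL_Int_atMost[OF S] by blast
qed



lemma cauchy_lin:
  fixes \<phi> :: "real \<Rightarrow> complex"
  assumes h: "h > 0"
  and add: "\<And>s t. 0 \<le> s \<Longrightarrow> 0 \<le> t \<Longrightarrow> s + t \<le> h \<Longrightarrow> \<phi> (s+t) = \<phi> s + \<phi> t"
  and cont: "\<And>e. e > 0 \<Longrightarrow> \<exists>d>0. \<forall>s. 0 \<le> s \<and> s < d \<longrightarrow> norm (\<phi> s) < e"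
  and s: "0 \<le> s" "s \<le> h"
  shows "\<phi> s = of_real (s / h) * \<phi> h"
proof -
  have half: "\<phi> h = of_real (2^n) * \<phi> (h / 2^n)" for n
  proof (induction n)
    case 0 then show ?case by simp
  next
    case (Suc n)
    have "\<phi> (h / 2^n) = \<phi> (h / 2^Suc n + h / 2^Suc n)" by simp
    also have "\<dots> = \<phi> (h / 2^Suc n) + \<phi> (h / 2^Suc n)"
      using h by (intro add) (auto simp: field_simps)
    finally show ?case using Suc by (simp add: algebra_simps)
  qed
  have mult: "real k * (h / 2^n) \<le> h \<Longrightarrow> \<phi> (real k * (h / 2^n)) = of_nat k * \<phi> (h / 2^n)" for k n
  proof (induction k)
    case 0
    have "\<phi> 0 = \<phi> (0 + 0)" by simp
    also have "\<dots> = \<phi> 0 + \<phi> 0" using h by (intro add) auto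
    finally show ?case by simp
  next
    case (Suc k)
    have "real (Suc k) * (h / 2^n) = real k * (h / 2^n) + h / 2^n" by (simp add: field_simps)
    moreover have "real k * (h / 2^n) \<le> h" using Suc.prems h
      by (smt (verit) divide_nonneg_pos of_nat_0_le_iff zero_less_power calculation mult_nonneg_nonneg)
    moreover have "\<phi> (real k * (h / 2^n) + h / 2^n) = \<phi> (real k * (h / 2^n)) + \<phi> (h / 2^n)"
      using Suc.prems h calculation by (intro add) auto
    ultimately show ?case using Suc.IH by (simp add: algebra_simps)
  qed
  have small: "norm (\<phi> s - of_real (s / h) * \<phi> h) < 2 * e" if e: "e > 0" for e
  proof -
    obtain d where d: "d > 0" "\<And>s. 0 \<le> s \<Longrightarrow> s < d \<Longrightarrow> norm (\<phi> s) < e"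
      using cont[OF e] by blast
    obtain n where n1: "h / 2^n < d" and n2: "norm (\<phi> h) / 2^n < e"
    proof -
      obtain n1 where "h/d < 2^n1" using real_arch_pow[of 2 "h/d"] by auto
      then have "h / 2^n1 < d" using d h by (simp add: field_simps)
      moreover obtain n2 where "norm (\<phi> h) / 2^n2 < e"
      proof (cases "norm (\<phi> h) = 0")
        case True then show ?thesis using e that[of 0] by simp
      next
        case False
        then obtain n2 where "(1/2)^n2 < e / norm (\<phi> h)"
          using real_arch_pow_inv[of "e / norm (\<phi> h)" "1/2"] e by auto
        then show ?thesis using that[of n2] False by (simp add: field_simps)
      qed
      moreover have "(2::real)^n1 \<le> 2^max n1 n2" "(2::real)^n2 \<le> 2^max n1 n2"
        by (intro power_increasing; simp)+
      moreover have "h / 2^max n1 n2 \<le> h / 2^n1"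
        using h calculation(3) by (intro divide_left_mono) auto
      moreover have "norm (\<phi> h) / 2^max n1 n2 \<le> norm (\<phi> h) / 2^n2"
        using calculation(4) by (intro divide_left_mono) auto
      ultimately have "h / 2^max n1 n2 < d" "norm (\<phi> h) / 2^max n1 n2 < e"
        by linarith+
      then show ?thesis using that by blast
    qed
    define u where "u = h / 2^n"
    have u: "u > 0" using h by (simp add: u_def)
    define k where "k = nat \<lfloor>s / u\<rfloor>"
    define r where "r = s - real k * u"
    have kk: "real k = of_int \<lfloor>s / u\<rfloor>" unfolding k_def using s u by simp
    have f1: "of_int \<lfloor>s / u\<rfloor> \<le> s / u" and f2: "s / u < of_int \<lfloor>s / u\<rfloor> + 1" by linarith+
    have g1: "of_int \<lfloor>s / u\<rfloor> * u \<le> s" using mult_right_mono[OF f1, of u] u by simp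
    have g2: "s < (of_int \<lfloor>s / u\<rfloor> + 1) * u" using mult_strict_right_mono[OF f2 u] u by simp
    from g1 g2 have k1: "real k * u \<le> s" and k2: "s < real k * u + u"
      by (auto simp: kk algebra_simps)
    have r: "0 \<le> r" "r < u" using k1 k2 by (auto simp: r_def)
    have "\<phi> s = \<phi> (real k * u + r)" by (simp add: r_def)
    also have "\<dots> = \<phi> (real k * u) + \<phi> r" using r k1 s u by (intro add) (auto simp: r_def)
    also have "\<phi> (real k * u) = of_nat k * \<phi> u" using mult[of k n] k1 s by (simp add: u_def)
    also have "\<phi> u = \<phi> h / of_real (2^n)" using half[of n] by (simp add: u_def field_simps)
    finally have eq0: "\<phi> s = of_nat k * (\<phi> h / of_real (2^n)) + \<phi> r" .
    have "s / h = real k / 2^n + r / h" using h by (simp add: r_def u_def field_simps)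
    then have "of_real (s / h) = (of_nat k / of_real (2^n) + of_real (r / h) :: complex)"
      by (metis of_real_add of_real_divide of_real_of_nat_eq)
    then have eq: "\<phi> s - of_real (s / h) * \<phi> h = \<phi> r - of_real (r / h) * \<phi> h"
      unfolding eq0 by (simp add: algebra_simps)
    have "norm (\<phi> r) < e" using d(2)[of r] r n1 by (simp add: u_def)
    moreover have "norm (of_real (r / h) * \<phi> h) \<le> norm (\<phi> h) / 2^n"
    proof -
      have "norm (of_real (r / h) * \<phi> h) = (r/h) * norm (\<phi> h)" using r h unfolding norm_mult norm_of_real by simp
      also have "\<dots> \<le> (u/h) * norm (\<phi> h)" using r h by (intro mult_right_mono divide_right_mono) auto
      also have "\<dots> = norm (\<phi> h) / 2^n" using h by (simp add: u_def)
      finally show ?thesis .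
    qed
    ultimately show ?thesis unfolding eq using n2 norm_triangle_ineq4[of "\<phi> r" "of_real (r / h) * \<phi> h"]
      by linarith
  qed
  show ?thesis
  proof (rule ccontr)
    assume "\<phi> s \<noteq> of_real (s / h) * \<phi> h"
    then have "norm (\<phi> s - of_real (s / h) * \<phi> h) > 0" by simp
    then show False using small[of "norm (\<phi> s - of_real (s / h) * \<phi> h) / 2"] by simp
  qed
qed



lemma lam_nonneg: "0 \<le> lam A" by simp

lemma lam_Un: "A \<in> sets LL \<Longrightarrow> B \<in> sets LL \<Longrightarrow> A \<inter> B = {} \<Longrightarrow> lam (A \<union> B) = lam A + lam B"
  by (simp add: LLp.finite_measure_Union)

lemma lam_Diff: "A \<in> sets LL \<Longrightarrow> B \<in> sets LL \<Longrightarrow> B \<subseteq> A \<Longrightarrow> lam (A - B) = lam A - lam B"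
  by (simp add: LLp.finite_measure_Diff)

lemma lam_Diff_ge: "A \<in> sets LL \<Longrightarrow> B \<in> sets LL \<Longrightarrow> lam (A - B) \<ge> lam A - lam B"
  using LLp.finite_measure_Diff'[of A B] LLp.finite_measure_mono[of "A \<inter> B" B] by auto

lemma lam_Un_le: "A \<in> sets LL \<Longrightarrow> B \<in> sets LL \<Longrightarrow> lam (A \<union> B) \<le> lam A + lam B"
  by (simp add: measure_Un_le)

lemma L1star:
  fixes \<psi> :: "real set \<Rightarrow> complex"
  assumes W: "W \<in> sets LL" and a: "0 < a" "a < lam W"
  and add: "\<And>S T. S \<in> sets LL \<Longrightarrow> T \<in> sets LL \<Longrightarrow> S \<subseteq> W \<Longrightarrow> T \<subseteq> W \<Longrightarrow> S \<inter> T = {} \<Longrightarrow> \<psi> (S \<union> T) = \<psi> S + \<psi> T"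
  and cont: "\<And>e. e > 0 \<Longrightarrow> \<exists>d>0. \<forall>S\<in>sets LL. S \<subseteq> W \<longrightarrow> lam S < d \<longrightarrow> norm (\<psi> S) < e"
  and eq: "\<And>Y Y'. Y \<in> sets LL \<Longrightarrow> Y' \<in> sets LL \<Longrightarrow> Y \<subseteq> W \<Longrightarrow> Y' \<subseteq> W \<Longrightarrow> lam Y = a \<Longrightarrow> lam Y' = a \<Longrightarrow> \<psi> Y = \<psi> Y'"
  shows "\<exists>c. \<forall>S\<in>sets LL. S \<subseteq> W \<longrightarrow> \<psi> S = c * of_real (lam S)"
proof -
  define g where "g = min a (lam W - a)"
  have g: "0 < g" "g \<le> a" "g \<le> lam W - a" using a by (auto simp: g_def)
  have EQ2: "\<psi> B = \<psi> B'" if B: "B \<in> sets LL" "B \<subseteq> W" and B': "B' \<in> sets LL" "B' \<subseteq> W"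
    and s: "lam B = s" "lam B' = s" "s \<le> g" for B B' s
  proof -
    have R: "W - (B \<union> B') \<in> sets LL" using W B B' by auto
    have "lam (W - (B \<union> B')) \<ge> lam W - lam (B \<union> B')" using lam_Diff_ge W B B' by auto
    moreover have "lam (B \<union> B') \<le> 2 * s" using lam_Un_le[OF B(1) B'(1)] s by simp
    ultimately have "a - s \<le> lam (W - (B \<union> B'))" using g s by linarith
    moreover have "0 \<le> a - s" using g s by simp
    ultimately obtain D where D: "D \<in> sets LL" "D \<subseteq> W - (B \<union> B')" "lam D = a - s"
      using nonatomic[OF R] by blast
    have "lam (B \<union> D) = a" using D B s by (subst lam_Un) auto
    moreover have "lam (B' \<union> D) = a" using D B' s by (subst lam_Un) auto
    ultimately have "\<psi> (B \<union> D) = \<psi> (B' \<union> D)"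
      using D B B' by (intro eq) auto
    moreover have "\<psi> (B \<union> D) = \<psi> B + \<psi> D" using D B by (intro add) auto
    moreover have "\<psi> (B' \<union> D) = \<psi> B' + \<psi> D" using D B' by (intro add) auto
    ultimately show ?thesis by simp
  qed
  have ex: "\<exists>B. B \<in> sets LL \<and> B \<subseteq> W \<and> lam B = s" if "0 \<le> s" "s \<le> g" for s
    using nonatomic[OF W, of s] that g a by auto
  define \<phi> where "\<phi> s = \<psi> (SOME B. B \<in> sets LL \<and> B \<subseteq> W \<and> lam B = s)" for s
  have \<phi>: "\<psi> B = \<phi> s" if "B \<in> sets LL" "B \<subseteq> W" "lam B = s" "s \<le> g" for B s
  proof -
    have "0 \<le> s" using that by auto
    from someI_ex[OF ex[OF this \<open>s \<le> g\<close>]] show ?thesis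
      unfolding \<phi>_def using that by (intro EQ2) auto
  qed
  have \<phi>lin: "\<phi> s = of_real (s / g) * \<phi> g" if "0 \<le> s" "s \<le> g" for s
  proof (rule cauchy_lin[OF g(1) _ _ that])
    fix s t :: real assume st: "0 \<le> s" "0 \<le> t" "s + t \<le> g"
    obtain B where B: "B \<in> sets LL" "B \<subseteq> W" "lam B = s" using ex[of s] st by auto
    have "lam (W - B) = lam W - s" using lam_Diff W B by auto
    then have "t \<le> lam (W - B)" using st g by linarith
    then obtain C where C: "C \<in> sets LL" "C \<subseteq> W - B" "lam C = t"
      using nonatomic[of "W - B" t] W B st by auto
    have "\<psi> (B \<union> C) = \<psi> B + \<psi> C" using B C by (intro add) auto
    moreover have "lam (B \<union> C) = s + t" using B C by (subst lam_Un) auto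
    moreover have "\<psi> (B \<union> C) = \<phi> (s + t)" using B C st calculation(2) by (intro \<phi>) auto
    moreover have "\<psi> B = \<phi> s" using B C st lam_nonneg[of C] by (intro \<phi>) auto
    moreover have "\<psi> C = \<phi> t" using B C st lam_nonneg[of B] by (intro \<phi>) auto
    ultimately show "\<phi> (s + t) = \<phi> s + \<phi> t" by simp
  next
    fix e :: real assume "e > 0"
    then obtain d where d: "d > 0" "\<forall>S\<in>sets LL. S \<subseteq> W \<longrightarrow> lam S < d \<longrightarrow> norm (\<psi> S) < e"
      using cont by blast
    show "\<exists>d>0. \<forall>s. 0 \<le> s \<and> s < d \<longrightarrow> norm (\<phi> s) < e"
    proof (intro exI[of _ "min d g"] conjI allI impI)
      fix s assume s: "0 \<le> s \<and> s < min d g"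
      then obtain B where B: "B \<in> sets LL" "B \<subseteq> W" "lam B = s" using ex[of s] by auto
      then have "\<psi> B = \<phi> s" using s by (intro \<phi>) auto
      with d B s show "norm (\<phi> s) < e" by auto
    qed (use d g in auto)
  qed
  define c where "c = \<phi> g / of_real g"
  have small: "\<psi> S = c * of_real (lam S)" if "S \<in> sets LL" "S \<subseteq> W" "lam S \<le> g" for S
  proof -
    have "\<psi> S = \<phi> (lam S)" using that by (intro \<phi>) auto
    also have "\<dots> = c * of_real (lam S)" using \<phi>lin[of "lam S"] that g by (simp add: c_def)
    finally show ?thesis .
  qed
  have ind: "\<forall>S. S \<in> sets LL \<longrightarrow> S \<subseteq> W \<longrightarrow> lam S \<le> real n * g \<longrightarrow> \<psi> S = c * of_real (lam S)" for n
  proof (induction n)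
    case 0
    show ?case
    proof (intro allI impI)
      fix S assume S: "S \<in> sets LL" "S \<subseteq> W" "lam S \<le> real 0 * g"
      then have "lam S \<le> g" using g by simp
      then show "\<psi> S = c * of_real (lam S)" using small S by blast
    qed
  next
    case (Suc n)
    show ?case
    proof (intro allI impI)
      fix S assume S: "S \<in> sets LL" "S \<subseteq> W" "lam S \<le> real (Suc n) * g"
      show "\<psi> S = c * of_real (lam S)"
      proof (cases "lam S \<le> g")
        case True then show ?thesis using small S by blast
      next
        case False
        then obtain P where P: "P \<in> sets LL" "P \<subseteq> S" "lam P = g"
          using nonatomic[OF S(1), of g] g by auto
        have SP: "S = P \<union> (S - P)" using P by auto
        have "\<psi> (P \<union> (S - P)) = \<psi> P + \<psi> (S - P)"
          using P S by (intro add) auto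
        then have "\<psi> S = \<psi> P + \<psi> (S - P)" using SP by simp
        moreover have "\<psi> P = c * of_real g" using small[of P] P S by auto
        moreover have "lam (S - P) = lam S - g" using lam_Diff S P by auto
        moreover have "lam (S - P) \<le> real n * g" using S(3) calculation(3) by (simp add: algebra_simps)
        moreover have "S - P \<in> sets LL" "S - P \<subseteq> W" using S P by auto
        moreover have "\<psi> (S - P) = c * of_real (lam (S - P))"
          using Suc.IH calculation(4,5,6) by blast
        ultimately show ?thesis by (simp add: algebra_simps)
      qed
    qed
  qed
  show ?thesis
  proof (intro exI[of _ c] ballI impI)
    fix S assume "S \<in> sets LL" "S \<subseteq> W"
    obtain n where "lam S < real n * g" using ex_less_of_nat_mult[OF g(1)] by blast
    then show "\<psi> S = c * of_real (lam S)" using ind[of n] \<open>S \<in> sets LL\<close> \<open>S \<subseteq> W\<close> by auto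
  qed
qed



definition meas :: "nat \<Rightarrow> (nat \<Rightarrow> real set) \<Rightarrow> bool" where
  "meas m B \<longleftrightarrow> (\<forall>i<m. B i \<in> sets LL)"
definition disj :: "nat \<Rightarrow> (nat \<Rightarrow> real set) \<Rightarrow> bool" where
  "disj m B \<longleftrightarrow> (\<forall>i<m. \<forall>j<m. i \<noteq> j \<longrightarrow> B i \<inter> B j = {})"
definition ADD :: "nat \<Rightarrow> ((nat \<Rightarrow> real set) \<Rightarrow> complex) \<Rightarrow> bool" where
  "ADD m \<Phi> \<longleftrightarrow> (\<forall>E k X Y. k < m \<longrightarrow> (\<forall>i<m. i \<noteq> k \<longrightarrow> E i \<in> sets LL) \<longrightarrow> X \<in> sets LL \<longrightarrow> Y \<in> sets LL
      \<longrightarrow> X \<inter> Y = {} \<longrightarrow> \<Phi> (E(k := X \<union> Y)) = \<Phi> (E(k := X)) + \<Phi> (E(k := Y)))"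
definition CONT :: "nat \<Rightarrow> ((nat \<Rightarrow> real set) \<Rightarrow> complex) \<Rightarrow> bool" where
  "CONT m \<Phi> \<longleftrightarrow> (\<forall>e>0. \<exists>d>0. \<forall>E k. k < m \<longrightarrow> meas m E \<longrightarrow> lam (E k) < d \<longrightarrow> norm (\<Phi> E) < e)"
definition SYM :: "nat \<Rightarrow> ((nat \<Rightarrow> real set) \<Rightarrow> complex) \<Rightarrow> bool" where
  "SYM m \<Phi> \<longleftrightarrow> (\<forall>\<sigma> E. \<sigma> permutes {..<m} \<longrightarrow> meas m E \<longrightarrow> \<Phi> (E \<circ> \<sigma>) = \<Phi> E)"

lemma ADD_D: "ADD m \<Phi> \<Longrightarrow> k < m \<Longrightarrow> (\<forall>i<m. i \<noteq> k \<longrightarrow> E i \<in> sets LL) \<Longrightarrow> X \<in> sets LL \<Longrightarrow> Y \<in> sets LL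
      \<Longrightarrow> X \<inter> Y = {} \<Longrightarrow> \<Phi> (E(k := X \<union> Y)) = \<Phi> (E(k := X)) + \<Phi> (E(k := Y))"
  unfolding ADD_def by blast

lemma CONT_D: "CONT m \<Phi> \<Longrightarrow> e > 0 \<Longrightarrow> \<exists>d>0. \<forall>E k. k < m \<longrightarrow> meas m E \<longrightarrow> lam (E k) < d \<longrightarrow> norm (\<Phi> E) < e"
  unfolding CONT_def by blast

lemma psi_lin:
  assumes add: "ADD m \<Phi>" and cont: "CONT m \<Phi>" and k: "k < m"
    and E: "\<forall>i<m. i \<noteq> k \<longrightarrow> E i \<in> sets LL"
    and W: "W \<in> sets LL" and a: "0 < a" "a < lam W"
    and eq: "\<And>Y Y'. Y \<in> sets LL \<Longrightarrow> Y' \<in> sets LL \<Longrightarrow> Y \<subseteq> W \<Longrightarrow> Y' \<subseteq> W \<Longrightarrow> lam Y = a \<Longrightarrow> lam Y' = a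
       \<Longrightarrow> \<Phi> (E(k := Y)) = \<Phi> (E(k := Y'))"
  shows "\<exists>c. \<forall>S\<in>sets LL. S \<subseteq> W \<longrightarrow> \<Phi> (E(k := S)) = c * of_real (lam S)"
proof (rule L1star[OF W a, where \<psi> = "\<lambda>S. \<Phi> (E(k := S))"])
  fix S T assume "S \<in> sets LL" "T \<in> sets LL" "S \<inter> T = {}"
  then show "\<Phi> (E(k := S \<union> T)) = \<Phi> (E(k := S)) + \<Phi> (E(k := T))"
    by (rule ADD_D[OF add k E])
next
  fix e :: real assume "e > 0"
  then obtain d where d: "d > 0" "\<forall>E k. k < m \<longrightarrow> meas m E \<longrightarrow> lam (E k) < d \<longrightarrow> norm (\<Phi> E) < e"
    using CONT_D[OF cont] by blast
  show "\<exists>d>0. \<forall>S\<in>sets LL. S \<subseteq> W \<longrightarrow> lam S < d \<longrightarrow> norm (\<Phi> (E(k := S))) < e"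
  proof (intro exI[of _ d] conjI ballI impI)
    fix S assume "S \<in> sets LL" "lam S < d"
    moreover have "meas m (E(k := S))" using E \<open>S \<in> sets LL\<close> by (auto simp: meas_def)
    ultimately show "norm (\<Phi> (E(k := S))) < e" using d(2)[rule_format, of k "E(k := S)"] k by simp
  qed (use d in auto)
next
  fix Y Y' assume "Y \<in> sets LL" "Y' \<in> sets LL" "Y \<subseteq> W" "Y' \<subseteq> W" "lam Y = a" "lam Y' = a"
  then show "\<Phi> (E(k := Y)) = \<Phi> (E(k := Y'))" by (rule eq)
qed

lemma psi_zero:
  assumes add: "ADD m \<Phi>" and cont: "CONT m \<Phi>" and k: "k < m"
    and E: "\<forall>i<m. i \<noteq> k \<longrightarrow> E i \<in> sets LL"
    and W: "W \<in> sets LL" and a: "0 < a" "a < lam W"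
    and z: "\<And>Y. Y \<in> sets LL \<Longrightarrow> Y \<subseteq> W \<Longrightarrow> lam Y = a \<Longrightarrow> \<Phi> (E(k := Y)) = 0"
    and S: "S \<in> sets LL" "S \<subseteq> W"
  shows "\<Phi> (E(k := S)) = 0"
proof -
  have "\<exists>c. \<forall>S\<in>sets LL. S \<subseteq> W \<longrightarrow> \<Phi> (E(k := S)) = c * of_real (lam S)"
  proof (rule psi_lin[OF add cont k E W a])
    fix Y Y' assume "Y \<in> sets LL" "Y' \<in> sets LL" "Y \<subseteq> W" "Y' \<subseteq> W" "lam Y = a" "lam Y' = a"
    then show "\<Phi> (E(k := Y)) = \<Phi> (E(k := Y'))" using z by simp
  qed
  then obtain c where c: "\<forall>S\<in>sets LL. S \<subseteq> W \<longrightarrow> \<Phi> (E(k := S)) = c * of_real (lam S)" by blast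
  obtain Y where Y: "Y \<in> sets LL" "Y \<subseteq> W" "lam Y = a" using nonatomic[OF W, of a] a by auto
  then have "\<Phi> (E(k := Y)) = c * of_real a" using c by simp
  then have "c * of_real a = 0" using z[OF Y] by simp
  then have "c = 0" using a by simp
  then show ?thesis using c S by simp
qed

lemma lam_compl_union:
  assumes V: "V \<in> sets LL" and F: "finite I" "\<And>i. i \<in> I \<Longrightarrow> B i \<in> sets LL"
  shows "lam (V - (\<Union>i\<in>I. B i)) \<ge> lam V - (\<Sum>i\<in>I. lam (B i))"
proof -
  have U: "(\<Union>i\<in>I. B i) \<in> sets LL" using F by auto
  have "lam (V - (\<Union>i\<in>I. B i)) \<ge> lam V - lam (\<Union>i\<in>I. B i)" using lam_Diff_ge[OF V U] .
  moreover have "lam (\<Union>i\<in>I. B i) \<le> (\<Sum>i\<in>I. lam (B i))" using measure_UNION_le[of I B LL] F by blast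
  ultimately show ?thesis by linarith
qed

lemma core1:
  assumes add: "ADD m \<Phi>" and cont: "CONT m \<Phi>"
    and pos: "\<forall>i<m. 0 < \<alpha> i" and sum: "(\<Sum>i<m. \<alpha> i) < 1"
    and van: "\<forall>A. meas m A \<longrightarrow> disj m A \<longrightarrow> (\<forall>i<m. lam (A i) = \<alpha> i) \<longrightarrow> \<Phi> A = 0"
  shows "\<exists>\<delta>>0. \<forall>B. meas m B \<longrightarrow> disj m B \<longrightarrow> (\<forall>i<m. lam (B i) \<le> \<delta>) \<longrightarrow> \<Phi> B = 0"
proof -
  define \<delta> where "\<delta> = (1 - (\<Sum>i<m. \<alpha> i)) / (2 * (real m + 1))"
  have \<delta>: "\<delta> > 0" using sum by (simp add: \<delta>_def)
  have m\<delta>: "real m * \<delta> < 1 - (\<Sum>i<m. \<alpha> i)"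
  proof -
    have "real m * \<delta> = (1 - (\<Sum>i<m. \<alpha> i)) * (real m / (2 * (real m + 1)))" by (simp add: \<delta>_def)
    also have "\<dots> < (1 - (\<Sum>i<m. \<alpha> i)) * 1"
      using sum by (intro mult_strict_left_mono) auto
    finally show ?thesis by simp
  qed
  have claim: "k \<le> m \<Longrightarrow> \<forall>B. meas m B \<longrightarrow> disj m B \<longrightarrow>
      (\<forall>i<m. (i < k \<longrightarrow> lam (B i) \<le> \<delta>) \<and> (k \<le> i \<longrightarrow> lam (B i) = \<alpha> i)) \<longrightarrow> \<Phi> B = 0" for k
  proof (induction k)
    case 0 then show ?case using van by auto
  next
    case (Suc k)
    show ?case
    proof (intro allI impI)
      fix B assume B: "meas m B" "disj m B"
        and Bm: "\<forall>i<m. (i < Suc k \<longrightarrow> lam (B i) \<le> \<delta>) \<and> (Suc k \<le> i \<longrightarrow> lam (B i) = \<alpha> i)"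
      have k: "k < m" using Suc.prems by simp
      define I where "I = {..<m} - {k}"
      define W where "W = {0..1} - (\<Union>j\<in>I. B j)"
      have BI: "\<And>j. j \<in> I \<Longrightarrow> B j \<in> sets LL" using B by (auto simp: I_def meas_def)
      have W: "W \<in> sets LL" unfolding W_def using BI by (auto simp: I_def)
      have one: "lam {0..1} = 1" using LLp.prob_space by simp
      have "lam W \<ge> 1 - (\<Sum>j\<in>I. lam (B j))"
        using lam_compl_union[of "{0..1}" I B] BI one by (simp add: W_def I_def)
      moreover have "(\<Sum>j\<in>I. lam (B j)) \<le> (\<Sum>j\<in>I. \<alpha> j + \<delta>)"
      proof (rule sum_mono)
        fix j assume "j \<in> I"
        then have j: "j < m" "j \<noteq> k" by (auto simp: I_def)
        then show "lam (B j) \<le> \<alpha> j + \<delta>" using Bm[rule_format, of j] pos[rule_format, of j] \<delta>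
          by (cases "j < k") auto
      qed
      moreover have "(\<Sum>j\<in>I. \<alpha> j + \<delta>) = (\<Sum>i<m. \<alpha> i) - \<alpha> k + real (m - 1) * \<delta>"
        using k by (simp add: I_def sum.distrib sum_diff1 card_Diff_singleton)
      moreover have "real (m - 1) * \<delta> \<le> real m * \<delta>" using \<delta> k by (intro mult_right_mono) auto
      ultimately have aW: "\<alpha> k < lam W" using m\<delta> by linarith
      have Bk1: "B k \<in> sets LL" using B k by (auto simp: meas_def)
      have Bk: "B k \<in> sets LL" "B k \<subseteq> W"
        using B k LL_sub[OF Bk1] by (auto simp: meas_def disj_def W_def I_def)
      have E: "\<forall>i<m. i \<noteq> k \<longrightarrow> B i \<in> sets LL" using B by (auto simp: meas_def)
      have "\<Phi> (B(k := B k)) = 0"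
      proof (rule psi_zero[OF add cont k E W _ aW _ Bk])
        show "0 < \<alpha> k" using pos k by simp
      next
        fix Y assume Y: "Y \<in> sets LL" "Y \<subseteq> W" "lam Y = \<alpha> k"
        have "meas m (B(k := Y))" using B Y by (auto simp: meas_def)
        moreover have "disj m (B(k := Y))"
          using B Y k unfolding disj_def W_def I_def by auto
        moreover have "\<forall>i<m. (i < k \<longrightarrow> lam ((B(k := Y)) i) \<le> \<delta>) \<and> (k \<le> i \<longrightarrow> lam ((B(k := Y)) i) = \<alpha> i)"
          using Bm Y by auto
        ultimately show "\<Phi> (B(k := Y)) = 0" using Suc.IH k by simp
      qed
      then show "\<Phi> B = 0" by simp
    qed
  qed
  show ?thesis
    using claim[of m] \<delta> by (intro exI[of _ \<delta>]) auto
qed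



lemma L1zero:
  fixes \<psi> :: "real set \<Rightarrow> complex"
  assumes W: "W \<in> sets LL" and a: "0 < a" "a < lam W"
  and add: "\<And>S T. S \<in> sets LL \<Longrightarrow> T \<in> sets LL \<Longrightarrow> S \<subseteq> W \<Longrightarrow> T \<subseteq> W \<Longrightarrow> S \<inter> T = {} \<Longrightarrow> \<psi> (S \<union> T) = \<psi> S + \<psi> T"
  and cont: "\<And>e. e > 0 \<Longrightarrow> \<exists>d>0. \<forall>S\<in>sets LL. S \<subseteq> W \<longrightarrow> lam S < d \<longrightarrow> norm (\<psi> S) < e"
  and z: "\<And>Y. Y \<in> sets LL \<Longrightarrow> Y \<subseteq> W \<Longrightarrow> lam Y = a \<Longrightarrow> \<psi> Y = 0"
  and S: "S \<in> sets LL" "S \<subseteq> W"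
  shows "\<psi> S = 0"
proof -
  have "\<exists>c. \<forall>S\<in>sets LL. S \<subseteq> W \<longrightarrow> \<psi> S = c * of_real (lam S)"
  proof (rule L1star[OF W a add cont])
    fix Y Y' assume "Y \<in> sets LL" "Y' \<in> sets LL" "Y \<subseteq> W" "Y' \<subseteq> W" "lam Y = a" "lam Y' = a"
    then show "\<psi> Y = \<psi> Y'" using z by simp
  qed auto
  then obtain c where c: "\<forall>S\<in>sets LL. S \<subseteq> W \<longrightarrow> \<psi> S = c * of_real (lam S)" by blast
  obtain Y where Y: "Y \<in> sets LL" "Y \<subseteq> W" "lam Y = a" using nonatomic[OF W, of a] a by auto
  then have "\<psi> Y = c * of_real a" using c by simp
  then have "c * of_real a = 0" using z[OF Y] by simp
  then have "c = 0" using a by simp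
  then show ?thesis using c S by simp
qed

lemma base2:
  fixes Q :: "real set \<Rightarrow> real set \<Rightarrow> complex"
  assumes ab: "0 < a" "0 < b" "a \<noteq> b"
  and V: "V \<in> sets LL" "lam V = a + b"
  and addQ: "\<And>X Y Z. X \<in> sets LL \<Longrightarrow> Y \<in> sets LL \<Longrightarrow> Z \<in> sets LL \<Longrightarrow> X \<inter> Y = {} \<Longrightarrow> Q (X \<union> Y) Z = Q X Z + Q Y Z"
  and symQ: "\<And>X Y. X \<in> sets LL \<Longrightarrow> Y \<in> sets LL \<Longrightarrow> Q X Y = Q Y X"
  and contQ: "\<And>e. e > 0 \<Longrightarrow> \<exists>d>0. \<forall>X\<in>sets LL. \<forall>Y\<in>sets LL. lam X < d \<longrightarrow> norm (Q X Y) < e"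
  and vanQ: "\<And>X Y. X \<in> sets LL \<Longrightarrow> Y \<in> sets LL \<Longrightarrow> X \<subseteq> V \<Longrightarrow> Y \<subseteq> V \<Longrightarrow> X \<inter> Y = {} \<Longrightarrow> lam X = a \<Longrightarrow> lam Y = b \<Longrightarrow> Q X Y = 0"
  and B: "B \<in> sets LL" "B \<subseteq> V" "lam B \<le> min a b / 4" and C: "C \<in> sets LL" "C \<subseteq> V" "B \<inter> C = {}"
  shows "Q B C = 0"
proof -
  have addR: "Q Z (X \<union> Y) = Q Z X + Q Z Y"
    if "X \<in> sets LL" "Y \<in> sets LL" "Z \<in> sets LL" "X \<inter> Y = {}" for X Y Z
    using that addQ[of X Y Z] symQ by (metis sets.Un)
  have contR: "\<exists>d>0. \<forall>S\<in>sets LL. lam S < d \<longrightarrow> norm (Q X S) < e" if "e > 0" "X \<in> sets LL" for X e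
  proof -
    obtain d where d: "d > 0" "\<forall>X\<in>sets LL. \<forall>Y\<in>sets LL. lam X < d \<longrightarrow> norm (Q X Y) < e" using contQ[OF \<open>e>0\<close>] by blast
    show ?thesis
    proof (intro exI[of _ d] conjI ballI impI)
      fix S assume "S \<in> sets LL" "lam S < d"
      then show "norm (Q X S) < e" using d(2) that(2) symQ[of X S] by simp
    qed (use d in simp)
  qed
  have SWAP: "Q B1 S = Q C1 S"
    if B1: "B1 \<in> sets LL" "B1 \<subseteq> V" and C1: "C1 \<in> sets LL" "C1 \<subseteq> V" and S: "S \<in> sets LL" "S \<subseteq> V"
      and dj: "B1 \<inter> C1 = {}" "B1 \<inter> S = {}" "C1 \<inter> S = {}"
      and \<beta>: "lam B1 = \<beta>" "lam C1 = \<beta>" "\<beta> < a" "\<beta> < b" for B1 C1 S \<beta>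
  proof -
    define W where "W = V - (B1 \<union> C1)"
    have W: "W \<in> sets LL" using V B1 C1 by (simp add: W_def)
    have "lam (B1 \<union> C1) = 2 * \<beta>" using lam_Un[OF B1(1) C1(1) dj(1)] \<beta> by simp
    then have lW: "lam W = a + b - 2 * \<beta>" using lam_Diff[of V "B1 \<union> C1"] V B1 C1 by (simp add: W_def)
    define \<psi> where "\<psi> Z = Q B1 Z - Q C1 Z" for Z
    have \<psi>add: "\<psi> (X \<union> Y) = \<psi> X + \<psi> Y" if "X \<in> sets LL" "Y \<in> sets LL" "X \<inter> Y = {}" for X Y
      using addR[OF that(1,2) B1(1) that(3)] addR[OF that(1,2) C1(1) that(3)] by (simp add: \<psi>_def)
    have key: "\<psi> Y = \<psi> W / 2" if Y: "Y \<in> sets LL" "Y \<subseteq> W" "lam Y = a - \<beta>" for Y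
    proof -
      define Z where "Z = W - Y"
      have Z: "Z \<in> sets LL" using W Y by (simp add: Z_def)
      have lZ: "lam Z = b - \<beta>" using lam_Diff[OF W Y(1,2)] lW Y by (simp add: Z_def)
      have YB: "Y \<inter> B1 = {}" "Y \<inter> C1 = {}" "Z \<inter> B1 = {}" "Z \<inter> C1 = {}" "Y \<inter> Z = {}"
        using Y(2) by (auto simp: W_def Z_def)
      have sub: "Y \<subseteq> V" "Z \<subseteq> V" using Y(2) by (auto simp: W_def Z_def)
      have v1: "Q (Y \<union> B1) (Z \<union> C1) = 0"
      proof (rule vanQ)
        show "lam (Y \<union> B1) = a" using lam_Un[OF Y(1) B1(1) YB(1)] Y \<beta> by simp
        show "lam (Z \<union> C1) = b" using lam_Un[OF Z C1(1) YB(4)] lZ \<beta> by simp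
      qed (use Y B1 C1 Z YB sub dj in auto)
      have v2: "Q (Y \<union> C1) (Z \<union> B1) = 0"
      proof (rule vanQ)
        show "lam (Y \<union> C1) = a" using lam_Un[OF Y(1) C1(1) YB(2)] Y \<beta> by simp
        show "lam (Z \<union> B1) = b" using lam_Un[OF Z B1(1) YB(3)] lZ \<beta> by simp
      qed (use Y B1 C1 Z YB sub dj in auto)
      have e1: "Q (Y \<union> B1) (Z \<union> C1) = Q Y Z + Q Y C1 + Q B1 Z + Q B1 C1"
        using addQ[OF Y(1) B1(1) _ YB(1), of "Z \<union> C1"] addR[OF Z C1(1) Y(1) YB(4)] addR[OF Z C1(1) B1(1) YB(4)] Z C1
        by simp
      have e2: "Q (Y \<union> C1) (Z \<union> B1) = Q Y Z + Q Y B1 + Q C1 Z + Q C1 B1"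
        using addQ[OF Y(1) C1(1) _ YB(2), of "Z \<union> B1"] addR[OF Z B1(1) Y(1) YB(3)] addR[OF Z B1(1) C1(1) YB(3)] Z B1
        by simp
      have s: "Q Y C1 = Q C1 Y" "Q Y B1 = Q B1 Y" "Q C1 B1 = Q B1 C1"
        using symQ Y B1 C1 by auto
      have h1: "Q Y Z + Q C1 Y + Q B1 Z + Q B1 C1 = 0" using v1 e1 s by simp
      have h2: "Q Y Z + Q B1 Y + Q C1 Z + Q B1 C1 = 0" using v2 e2 s by simp
      have "(Q Y Z + Q C1 Y + Q B1 Z + Q B1 C1) - (Q Y Z + Q B1 Y + Q C1 Z + Q B1 C1) = 0"
        using h1 h2 by simp
      moreover have "(Q Y Z + Q C1 Y + Q B1 Z + Q B1 C1) - (Q Y Z + Q B1 Y + Q C1 Z + Q B1 C1)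
          = (Q B1 Z - Q C1 Z) - (Q B1 Y - Q C1 Y)" by (simp add: algebra_simps)
      ultimately have "\<psi> Z = \<psi> Y" unfolding \<psi>_def by simp
      moreover have "W = Y \<union> Z" using Y(2) by (auto simp: Z_def)
      then have "\<psi> W = \<psi> Y + \<psi> Z" using \<psi>add[OF Y(1) Z YB(5)] by simp
      ultimately show ?thesis by simp
    qed
    have "\<exists>c. \<forall>S\<in>sets LL. S \<subseteq> W \<longrightarrow> \<psi> S = c * of_real (lam S)"
    proof (rule L1star[OF W])
      show "0 < a - \<beta>" "a - \<beta> < lam W" using \<beta> lW by auto
    next
      fix S T assume "S \<in> sets LL" "T \<in> sets LL" "S \<inter> T = {}"
      then show "\<psi> (S \<union> T) = \<psi> S + \<psi> T" by (rule \<psi>add)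
    next
      fix e :: real assume e: "e > 0"
      obtain d1 where d1: "d1 > 0" "\<forall>S\<in>sets LL. lam S < d1 \<longrightarrow> norm (Q B1 S) < e/2" using contR[of "e/2" B1] e B1 by auto
      obtain d2 where d2: "d2 > 0" "\<forall>S\<in>sets LL. lam S < d2 \<longrightarrow> norm (Q C1 S) < e/2" using contR[of "e/2" C1] e C1 by auto
      show "\<exists>d>0. \<forall>S\<in>sets LL. S \<subseteq> W \<longrightarrow> lam S < d \<longrightarrow> norm (\<psi> S) < e"
      proof (intro exI[of _ "min d1 d2"] conjI ballI impI)
        fix S assume "S \<in> sets LL" "lam S < min d1 d2"
        then have "norm (Q B1 S) < e/2" "norm (Q C1 S) < e/2" using d1 d2 by auto
        then show "norm (\<psi> S) < e" unfolding \<psi>_def using norm_triangle_ineq4[of "Q B1 S" "Q C1 S"] by linarith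
      qed (use d1 d2 in auto)
    next
      fix Y Y' assume "Y \<in> sets LL" "Y' \<in> sets LL" "Y \<subseteq> W" "Y' \<subseteq> W" "lam Y = a - \<beta>" "lam Y' = a - \<beta>"
      then have "\<psi> Y = \<psi> W / 2" "\<psi> Y' = \<psi> W / 2" by (intro key; simp)+
      then show "\<psi> Y = \<psi> Y'" by (simp only:)
    qed
    then obtain c where c: "\<forall>S\<in>sets LL. S \<subseteq> W \<longrightarrow> \<psi> S = c * of_real (lam S)" by blast
    obtain Y0 where Y0: "Y0 \<in> sets LL" "Y0 \<subseteq> W" "lam Y0 = a - \<beta>"
      using nonatomic[OF W, of "a - \<beta>"] \<beta> lW by auto
    have "c * of_real (a - \<beta>) = \<psi> W / 2" using c key[OF Y0] Y0 by simp
    also have "\<psi> W = c * of_real (a + b - 2 * \<beta>)" using c W lW by simp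
    finally have "c * of_real (a - b) = 0" by (simp add: algebra_simps)
    then have "c = 0" using ab by simp
    moreover have "S \<subseteq> W" using S dj by (auto simp: W_def)
    ultimately have "\<psi> S = 0" using c S by simp
    then show ?thesis by (simp add: \<psi>_def)
  qed
  define h where "h = min a b / 4"
  have h: "0 < h" "h < a" "h < b" "3 * h \<le> a" using ab by (auto simp: h_def)
  have ii: "Q Z (V - X) = 0" if X: "X \<in> sets LL" "X \<subseteq> V" "lam X = a" and Z: "Z \<in> sets LL" "Z \<subseteq> X" for X Z
  proof -
    define T where "T = V - X"
    have T: "T \<in> sets LL" "T \<subseteq> V" "lam T = b" using lam_Diff[OF V(1) X(1,2)] V X by (auto simp: T_def)
    have "\<exists>c. \<forall>S\<in>sets LL. S \<subseteq> X \<longrightarrow> Q S T = c * of_real (lam S)"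
    proof (rule L1star[OF X(1)])
      show "0 < h" "h < lam X" using h X by auto
    next
      fix S1 S2 assume "S1 \<in> sets LL" "S2 \<in> sets LL" "S1 \<inter> S2 = {}"
      then show "Q (S1 \<union> S2) T = Q S1 T + Q S2 T" using addQ T by simp
    next
      fix e :: real assume "e > 0"
      then obtain d where d: "d > 0" "\<forall>X\<in>sets LL. \<forall>Y\<in>sets LL. lam X < d \<longrightarrow> norm (Q X Y) < e" using contQ by blast
      then show "\<exists>d>0. \<forall>S\<in>sets LL. S \<subseteq> X \<longrightarrow> lam S < d \<longrightarrow> norm (Q S T) < e" using T by blast
    next
      fix Y Y' assume Y: "Y \<in> sets LL" "Y' \<in> sets LL" "Y \<subseteq> X" "Y' \<subseteq> X" "lam Y = h" "lam Y' = h"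
      have R: "X - (Y \<union> Y') \<in> sets LL" using X Y by auto
      have "lam (X - (Y \<union> Y')) \<ge> lam X - lam (Y \<union> Y')" using lam_Diff_ge X Y by auto
      moreover have "lam (Y \<union> Y') \<le> 2 * h" using lam_Un_le[OF Y(1,2)] Y by simp
      ultimately have "h \<le> lam (X - (Y \<union> Y'))" using X h by linarith
      then obtain Y'' where Y'': "Y'' \<in> sets LL" "Y'' \<subseteq> X - (Y \<union> Y')" "lam Y'' = h"
        using nonatomic[OF R, of h] h by auto
      have TX: "T \<inter> X = {}" by (auto simp: T_def)
      have "Q Y T = Q Y'' T"
        by (rule SWAP[of Y Y'' T h]) (use Y Y'' T X TX h in auto)
      moreover have "Q Y' T = Q Y'' T"
        by (rule SWAP[of Y' Y'' T h]) (use Y Y'' T X TX h in auto)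
      ultimately show "Q Y T = Q Y' T" by simp
    qed
    then obtain c where c: "\<forall>S\<in>sets LL. S \<subseteq> X \<longrightarrow> Q S T = c * of_real (lam S)" by blast
    have "Q X T = 0" using vanQ[OF X(1) T(1) X(2) T(2) _ X(3) T(3)] by (auto simp: T_def)
    moreover have "Q X T = c * of_real a" using c X by simp
    ultimately have "c = 0" using ab by simp
    then show ?thesis using c Z by (simp add: T_def)
  qed
  define W where "W = V - B"
  have W: "W \<in> sets LL" using V B by (simp add: W_def)
  have lW: "lam W = a + b - lam B" using lam_Diff[OF V(1) B(1,2)] V by (simp add: W_def)
  show "Q B C = 0"
  proof (rule L1zero[OF W, where \<psi> = "Q B"])
    show "0 < b" using ab by simp
    show "b < lam W" using lW B h by (simp add: h_def)
  next
    fix S T assume "S \<in> sets LL" "T \<in> sets LL" "S \<inter> T = {}"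
    then show "Q B (S \<union> T) = Q B S + Q B T" using addR B by simp
  next
    fix e :: real assume "e > 0"
    then obtain d where "d > 0" "\<forall>S\<in>sets LL. lam S < d \<longrightarrow> norm (Q B S) < e" using contR B by blast
    then show "\<exists>d>0. \<forall>S\<in>sets LL. S \<subseteq> W \<longrightarrow> lam S < d \<longrightarrow> norm (Q B S) < e" by blast
  next
    fix T assume T: "T \<in> sets LL" "T \<subseteq> W" "lam T = b"
    define X where "X = V - T"
    have X: "X \<in> sets LL" "X \<subseteq> V" "lam X = a" using lam_Diff[of V T] V T by (auto simp: X_def W_def)
    have "B \<subseteq> X" using T B by (auto simp: X_def W_def)
    have "V - X = T" using T by (auto simp: X_def W_def)
    then show "Q B T = 0" using ii[OF X B(1) \<open>B \<subseteq> X\<close>] by simp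
  next
    show "C \<in> sets LL" "C \<subseteq> W" using C by (auto simp: W_def)
  qed
qed



definition GOOD :: "nat \<Rightarrow> (nat \<Rightarrow> real) \<Rightarrow> real \<Rightarrow> bool" where
  "GOOD m \<beta> \<delta> \<longleftrightarrow> (\<forall>V \<Phi>. V \<in> sets LL \<longrightarrow> lam V = (\<Sum>i<m. \<beta> i) \<longrightarrow> ADD m \<Phi> \<longrightarrow> CONT m \<Phi> \<longrightarrow> SYM m \<Phi> \<longrightarrow>
     (\<forall>A. meas m A \<longrightarrow> disj m A \<longrightarrow> (\<forall>i<m. A i \<subseteq> V \<and> lam (A i) = \<beta> i) \<longrightarrow> \<Phi> A = 0) \<longrightarrow>
     (\<forall>B. meas m B \<longrightarrow> disj m B \<longrightarrow> (\<forall>i<m. B i \<subseteq> V \<and> lam (B i) \<le> \<delta>) \<longrightarrow> \<Phi> B = 0))"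

lemma SYM_D: "SYM m \<Phi> \<Longrightarrow> \<sigma> permutes {..<m} \<Longrightarrow> meas m E \<Longrightarrow> \<Phi> (E \<circ> \<sigma>) = \<Phi> E"
  unfolding SYM_def by blast

lemma good2:
  assumes pos: "0 < \<beta> 0" "0 < \<beta> 1" and ne: "\<beta> 0 \<noteq> \<beta> 1"
  shows "GOOD 2 \<beta> (min (\<beta> 0) (\<beta> 1) / 4)"
  unfolding GOOD_def
proof (intro allI impI)
  fix V \<Phi> B
  assume V: "V \<in> sets LL" "lam V = (\<Sum>i<2. \<beta> i)" and add: "ADD 2 \<Phi>" and cont: "CONT 2 \<Phi>" and sym: "SYM 2 \<Phi>"
    and van: "\<forall>A. meas 2 A \<longrightarrow> disj 2 A \<longrightarrow> (\<forall>i<2. A i \<subseteq> V \<and> lam (A i) = \<beta> i) \<longrightarrow> \<Phi> A = 0"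
    and B: "meas 2 B" "disj 2 B" "\<forall>i<2. B i \<subseteq> V \<and> lam (B i) \<le> min (\<beta> 0) (\<beta> 1) / 4"
  define Q where "Q X Y = \<Phi> ((B(1 := Y))(0 := X))" for X Y
  have lV: "lam V = \<beta> 0 + \<beta> 1" using V by (simp add: numeral_2_eq_2)
  have "Q (B 0) (B 1) = 0"
  proof (rule base2[OF pos ne V(1) lV])
    fix X Y Z assume XYZ: "X \<in> sets LL" "Y \<in> sets LL" "Z \<in> sets LL" "X \<inter> Y = {}"
    have "\<Phi> ((B(1 := Z))(0 := X \<union> Y)) = \<Phi> ((B(1 := Z))(0 := X)) + \<Phi> ((B(1 := Z))(0 := Y))"
      by (rule ADD_D[where E = "B(1 := Z)"]) (use add XYZ in auto)
    then show "Q (X \<union> Y) Z = Q X Z + Q Y Z" unfolding Q_def .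
  next
    fix X Y assume XY: "X \<in> sets LL" "Y \<in> sets LL"
    have m: "meas 2 ((B(1 := Y))(0 := X))" using XY by (auto simp: meas_def less_2_cases_iff)
    have p: "Transposition.transpose 0 1 permutes {..<2::nat}" by (rule permutes_swap_id) auto
    have "(B(1 := Y))(0 := X) \<circ> Transposition.transpose 0 1 = (B(1 := X))(0 := Y)"
      by (rule ext) (simp add: Transposition.transpose_def)
    then show "Q X Y = Q Y X" using SYM_D[OF sym p m] by (simp add: Q_def)
  next
    fix e :: real assume "e > 0"
    then obtain d where d: "d > 0" "\<forall>E k. k < 2 \<longrightarrow> meas 2 E \<longrightarrow> lam (E k) < d \<longrightarrow> norm (\<Phi> E) < e"
      using CONT_D[OF cont] by blast
    show "\<exists>d>0. \<forall>X\<in>sets LL. \<forall>Y\<in>sets LL. lam X < d \<longrightarrow> norm (Q X Y) < e"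
    proof (intro exI[of _ d] conjI ballI impI)
      fix X Y assume XY: "X \<in> sets LL" "Y \<in> sets LL" "lam X < d"
      have m: "meas 2 ((B(1 := Y))(0 := X))" using XY by (auto simp: meas_def less_2_cases_iff)
      show "norm (Q X Y) < e" using d(2)[rule_format, OF _ m, of 0] XY by (simp add: Q_def)
    qed (use d in simp)
  next
    fix X Y assume XY: "X \<in> sets LL" "Y \<in> sets LL" "X \<subseteq> V" "Y \<subseteq> V" "X \<inter> Y = {}" "lam X = \<beta> 0" "lam Y = \<beta> 1"
    have "meas 2 ((B(1 := Y))(0 := X))" using XY by (auto simp: meas_def less_2_cases_iff)
    moreover have "disj 2 ((B(1 := Y))(0 := X))" using XY by (auto simp: disj_def less_2_cases_iff)
    moreover have "\<forall>i<2. ((B(1 := Y))(0 := X)) i \<subseteq> V \<and> lam (((B(1 := Y))(0 := X)) i) = \<beta> i"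
      using XY by (auto simp: less_2_cases_iff)
    ultimately show "Q X Y = 0" using van by (simp add: Q_def)
  next
    show "B 0 \<in> sets LL" "B 1 \<in> sets LL" using B(1) by (auto simp: meas_def)
    show "B 0 \<subseteq> V" "B 1 \<subseteq> V" using B(3) by auto
    show "lam (B 0) \<le> min (\<beta> 0) (\<beta> 1) / 4" using B(3) by auto
    show "B 0 \<inter> B 1 = {}" using B(2) by (auto simp: disj_def)
  qed
  moreover have "(B(1 := B 1))(0 := B 0) = B" by simp
  ultimately show "\<Phi> B = 0" by (simp add: Q_def)
qed



lemma good_step:
  assumes m: "2 \<le> m"
    and IH: "\<And>\<beta>. (\<forall>i<m. 0 < \<beta> i) \<Longrightarrow> (\<exists>i<m. \<exists>j<m. \<beta> i \<noteq> \<beta> j) \<Longrightarrow> \<exists>\<delta>>0. GOOD m \<beta> \<delta>"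
    and pos: "\<forall>i<Suc m. 0 < \<beta> i" and nc: "\<exists>i<Suc m. \<exists>j<Suc m. \<beta> i \<noteq> \<beta> j"
  shows "\<exists>\<delta>>0. GOOD (Suc m) \<beta> \<delta>"
proof -
  obtain i j where ij: "i < Suc m" "j < Suc m" "\<beta> i \<noteq> \<beta> j" using nc by blast
  define k where "k = (if 0 \<noteq> i \<and> 0 \<noteq> j then 0 else if 1 \<noteq> i \<and> 1 \<noteq> j then 1 else (2::nat))"
  have k: "k < Suc m" "k \<noteq> i" "k \<noteq> j" using m ij(3) by (auto simp: k_def)
  define \<tau> where "\<tau> = Transposition.transpose k m"
  have \<tau>p: "\<tau> permutes {..<Suc m}" unfolding \<tau>_def using k by (intro permutes_swap_id) auto
  have \<tau>\<tau>: "\<tau> (\<tau> x) = x" for x by (simp add: \<tau>_def)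
  have \<tau>lt: "\<tau> l < Suc m" if "l < Suc m" for l using permutes_in_image[OF \<tau>p] that by auto
  have \<tau>m: "\<tau> l = m \<longleftrightarrow> l = k" for l unfolding \<tau>_def by (auto simp: Transposition.transpose_def)
  define \<beta>' where "\<beta>' = \<beta> \<circ> \<tau>"
  have pos': "\<forall>l<Suc m. 0 < \<beta>' l" using pos \<tau>lt by (simp add: \<beta>'_def)
  have "\<tau> i < m" "\<tau> j < m" using \<tau>lt[of i] \<tau>lt[of j] \<tau>m[of i] \<tau>m[of j] ij k by auto
  moreover have "\<beta>' (\<tau> i) \<noteq> \<beta>' (\<tau> j)" using ij by (simp add: \<beta>'_def \<tau>\<tau>)
  ultimately have nc': "\<exists>i<m. \<exists>j<m. \<beta>' i \<noteq> \<beta>' j" by blast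
  obtain \<delta>' where \<delta>': "\<delta>' > 0" "GOOD m \<beta>' \<delta>'" using IH[OF _ nc'] pos' by auto
  define s' where "s' = (\<Sum>l<m. \<beta>' l)"
  have s': "s' > 0" unfolding s'_def using pos' m by (intro sum_pos) (auto simp: lessThan_empty_iff)
  have sumeq: "(\<Sum>l<Suc m. \<beta> l) = s' + \<beta>' m"
    using sum.permute[OF \<tau>p, of \<beta>] by (simp add: s'_def \<beta>'_def)
  define \<delta> where "\<delta> = min \<delta>' (s' / (2 * (real m + 1)))"
  have \<delta>: "\<delta> > 0" "\<delta> \<le> \<delta>'" using \<delta>' s' by (auto simp: \<delta>_def)
  have m\<delta>: "real m * \<delta> < s'"
  proof -
    have "real m * \<delta> \<le> real m * (s' / (2 * (real m + 1)))" by (intro mult_left_mono) (auto simp: \<delta>_def)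
    also have "\<dots> = s' * (real m / (2 * (real m + 1)))" by simp
    also have "\<dots> < s' * 1" using s' by (intro mult_strict_left_mono) auto
    finally show ?thesis by simp
  qed
  have "GOOD (Suc m) \<beta> \<delta>"
    unfolding GOOD_def
  proof (intro allI impI)
    fix V \<Phi> B
    assume V: "V \<in> sets LL" "lam V = (\<Sum>i<Suc m. \<beta> i)" and add: "ADD (Suc m) \<Phi>" and cont: "CONT (Suc m) \<Phi>"
      and sym: "SYM (Suc m) \<Phi>"
      and van: "\<forall>A. meas (Suc m) A \<longrightarrow> disj (Suc m) A \<longrightarrow> (\<forall>i<Suc m. A i \<subseteq> V \<and> lam (A i) = \<beta> i) \<longrightarrow> \<Phi> A = 0"
      and B: "meas (Suc m) B" "disj (Suc m) B" "\<forall>i<Suc m. B i \<subseteq> V \<and> lam (B i) \<le> \<delta>"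
    have van': "\<Phi> A = 0" if A: "meas (Suc m) A" "disj (Suc m) A" "\<forall>l<Suc m. A l \<subseteq> V \<and> lam (A l) = \<beta>' l" for A
    proof -
      have mA: "meas (Suc m) (A \<circ> \<tau>)" using A(1) \<tau>lt by (auto simp: meas_def)
      have "(A \<circ> \<tau>) \<circ> \<tau> = A" by (rule ext) (simp add: \<tau>\<tau>)
      then have "\<Phi> A = \<Phi> (A \<circ> \<tau>)" using SYM_D[OF sym \<tau>p mA] by simp
      moreover have "disj (Suc m) (A \<circ> \<tau>)"
        unfolding disj_def
      proof (intro allI impI)
        fix p q assume "p < Suc m" "q < Suc m" "p \<noteq> q"
        moreover have "\<tau> p \<noteq> \<tau> q" using \<open>p \<noteq> q\<close> \<tau>\<tau> by metis
        ultimately show "(A \<circ> \<tau>) p \<inter> (A \<circ> \<tau>) q = {}" using A(2) \<tau>lt by (simp add: disj_def)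
      qed
      moreover have "\<forall>l<Suc m. (A \<circ> \<tau>) l \<subseteq> V \<and> lam ((A \<circ> \<tau>) l) = \<beta> l"
        using A(3) \<tau>lt by (simp add: \<beta>'_def \<tau>\<tau>)
      ultimately show ?thesis using van mA by simp
    qed
    define W where "W = V - (\<Union>l\<in>{..<m}. B l)"
    have Bs: "\<And>l. l \<in> {..<m} \<Longrightarrow> B l \<in> sets LL" using B(1) by (auto simp: meas_def)
    have W: "W \<in> sets LL" unfolding W_def using V Bs by auto
    have "lam W \<ge> lam V - (\<Sum>l\<in>{..<m}. lam (B l))"
      unfolding W_def by (rule lam_compl_union[OF V(1)]) (use Bs in auto)
    moreover have "(\<Sum>l\<in>{..<m}. lam (B l)) \<le> (\<Sum>l\<in>{..<m}. \<delta>)" using B(3) by (intro sum_mono) auto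
    ultimately have aW: "\<beta>' m < lam W" using V(2) sumeq m\<delta> by simp
    have Bmd: "B m \<inter> B l = {}" if "l < m" for l using B(2)[unfolded disj_def, rule_format, of m l] that by simp
    have Bm1: "B m \<in> sets LL" using B(1) by (auto simp: meas_def)
    have "B m \<subseteq> V" using B(3) by auto
    then have Bm2: "B m \<subseteq> W" unfolding W_def using Bmd by blast
    note Bm = Bm1 Bm2
    have E: "\<forall>i<Suc m. i \<noteq> m \<longrightarrow> B i \<in> sets LL" using B(1) by (auto simp: meas_def)
    have "\<Phi> (B(m := B m)) = 0"
    proof (rule psi_zero[OF add cont _ E W _ aW _ Bm])
      show "m < Suc m" by simp
      show "0 < \<beta>' m" using pos' by simp
    next
      fix Y assume Y: "Y \<in> sets LL" "Y \<subseteq> W" "lam Y = \<beta>' m"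
      have YV: "Y \<subseteq> V" using Y(2) by (auto simp: W_def)
      define \<Psi> where "\<Psi> E = \<Phi> (E(m := Y))" for E
      have mY: "meas (Suc m) (E(m := Y))" if "meas m E" for E using that Y(1) by (auto simp: meas_def less_Suc_eq)
      have G: "GOOD m \<beta>' \<delta>'" by (rule \<delta>'(2))
      have "V - Y \<in> sets LL" using V Y by auto
      moreover have "lam (V - Y) = (\<Sum>l<m. \<beta>' l)"
        using lam_Diff[OF V(1) Y(1) YV] V(2) sumeq Y(3) by (simp add: s'_def)
      moreover have "ADD m \<Psi>"
        unfolding ADD_def
      proof (intro allI impI)
        fix E k' X Z assume H: "k' < m" "\<forall>i<m. i \<noteq> k' \<longrightarrow> E i \<in> sets LL" "X \<in> sets LL" "Z \<in> sets LL" "X \<inter> Z = {}"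
        have tw: "(E(k' := U))(m := Y) = (E(m := Y))(k' := U)" for U using H(1) by (auto simp: fun_upd_twist)
        have "\<Phi> ((E(m := Y))(k' := X \<union> Z)) = \<Phi> ((E(m := Y))(k' := X)) + \<Phi> ((E(m := Y))(k' := Z))"
          by (rule ADD_D[OF add]) (use H Y in \<open>auto simp: less_Suc_eq\<close>)
        then show "\<Psi> (E(k' := X \<union> Z)) = \<Psi> (E(k' := X)) + \<Psi> (E(k' := Z))" unfolding \<Psi>_def tw .
      qed
      moreover have "CONT m \<Psi>"
        unfolding CONT_def
      proof (intro allI impI)
        fix e :: real assume "e > 0"
        then obtain d where d: "d > 0" "\<forall>E k. k < Suc m \<longrightarrow> meas (Suc m) E \<longrightarrow> lam (E k) < d \<longrightarrow> norm (\<Phi> E) < e"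
          using CONT_D[OF cont] by blast
        show "\<exists>d>0. \<forall>E k. k < m \<longrightarrow> meas m E \<longrightarrow> lam (E k) < d \<longrightarrow> norm (\<Psi> E) < e"
        proof (intro exI[of _ d] conjI allI impI)
          fix E k' assume "k' < m" "meas m E" "lam (E k') < d"
          then show "norm (\<Psi> E) < e" using d(2)[rule_format, of k' "E(m := Y)"] mY unfolding \<Psi>_def by simp
        qed (use d in simp)
      qed
      moreover have "SYM m \<Psi>"
        unfolding SYM_def
      proof (intro allI impI)
        fix \<sigma> E assume \<sigma>: "\<sigma> permutes {..<m}" and E: "meas m E"
        have \<sigma>': "\<sigma> permutes {..<Suc m}" using permutes_subset[OF \<sigma>] by auto
        have "\<sigma> m = m" using permutes_not_in[OF \<sigma>] by simp
        have "\<sigma> x \<noteq> m" if "x \<noteq> m" for x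
          using that \<open>\<sigma> m = m\<close> permutes_inj[OF \<sigma>] by (metis injD)
        then have "(E \<circ> \<sigma>)(m := Y) = (E(m := Y)) \<circ> \<sigma>" using \<open>\<sigma> m = m\<close> by (auto simp: fun_eq_iff)
        then show "\<Psi> (E \<circ> \<sigma>) = \<Psi> E" using SYM_D[OF sym \<sigma>' mY[OF E]] by (simp add: \<Psi>_def)
      qed
      moreover have "\<forall>A. meas m A \<longrightarrow> disj m A \<longrightarrow> (\<forall>i<m. A i \<subseteq> V - Y \<and> lam (A i) = \<beta>' i) \<longrightarrow> \<Psi> A = 0"
      proof (intro allI impI)
        fix A assume A: "meas m A" "disj m A" "\<forall>i<m. A i \<subseteq> V - Y \<and> lam (A i) = \<beta>' i"
        have "disj (Suc m) (A(m := Y))" using A(2,3) unfolding disj_def by (auto simp: less_Suc_eq)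
        moreover have "\<forall>l<Suc m. (A(m := Y)) l \<subseteq> V \<and> lam ((A(m := Y)) l) = \<beta>' l"
          using A(3) Y YV by (auto simp: less_Suc_eq)
        ultimately show "\<Psi> A = 0" unfolding \<Psi>_def using van' mY[OF A(1)] by blast
      qed
      moreover have "meas m B" using B(1) by (auto simp: meas_def)
      moreover have "disj m B" using B(2) by (auto simp: disj_def)
      moreover have "\<forall>i<m. B i \<subseteq> V - Y \<and> lam (B i) \<le> \<delta>'"
      proof (intro allI impI)
        fix i assume "i < m"
        then have "B i \<subseteq> V" "lam (B i) \<le> \<delta>" using B(3) by auto
        moreover have "B i \<inter> Y = {}" using Y(2) \<open>i < m\<close> by (auto simp: W_def)
        ultimately show "B i \<subseteq> V - Y \<and> lam (B i) \<le> \<delta>'" using \<delta> by auto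
      qed
      ultimately have "\<Psi> B = 0" using G unfolding GOOD_def by blast
      then show "\<Phi> (B(m := Y)) = 0" by (simp add: \<Psi>_def)
    qed
    then show "\<Phi> B = 0" by simp
  qed
  then show ?thesis using \<delta> by blast
qed

lemma core2:
  assumes "2 \<le> m"
  shows "\<forall>\<beta>. (\<forall>i<m. 0 < \<beta> i) \<longrightarrow> (\<exists>i<m. \<exists>j<m. \<beta> i \<noteq> \<beta> j) \<longrightarrow> (\<exists>\<delta>>0. GOOD m \<beta> \<delta>)"
  using assms
proof (induction m rule: nat_induct_at_least)
  case base
  show ?case
  proof (intro allI impI)
    fix \<beta> :: "nat \<Rightarrow> real" assume pos: "\<forall>i<2. 0 < \<beta> i" and nc: "\<exists>i<2. \<exists>j<2. \<beta> i \<noteq> \<beta> j"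
    then have "\<beta> 0 \<noteq> \<beta> 1" by (auto simp: less_2_cases_iff)
    moreover have "0 < \<beta> 0" "0 < \<beta> 1" using pos by auto
    ultimately show "\<exists>\<delta>>0. GOOD 2 \<beta> \<delta>" using good2[of \<beta>] by (intro exI[of _ "min (\<beta> 0) (\<beta> 1) / 4"]) auto
  qed
next
  case (Suc m)
  show ?case
    using good_step[OF Suc.hyps(1)] Suc.IH by blast
qed



lemma abs_cont:
  fixes f :: "'a \<Rightarrow> complex"
  assumes fm: "finite_measure M" and f: "integrable M f" and e: "e > 0"
  shows "\<exists>d>0. \<forall>A\<in>sets M. measure M A < d \<longrightarrow> (\<integral>x. norm (f x) * indicator A x \<partial>M) < e"
proof -
  interpret finite_measure M by (rule fm)
  define g where "g x = norm (f x)" for x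
  have g: "integrable M g" unfolding g_def by (rule integrable_norm[OF f])
  have gm: "g \<in> borel_measurable M" using g by auto
  define h where "h n x = g x - min (g x) (real n)" for n x
  have hm: "h n \<in> borel_measurable M" for n using gm unfolding h_def by measurable
  have mint: "integrable M (\<lambda>x. min (g x) (real n))" for n
    using g by (intro Bochner_Integration.integrable_min integrable_const)
  have hint: "integrable M (h n)" for n
    unfolding h_def using g mint by (intro Bochner_Integration.integrable_diff)
  have "(\<lambda>n. integral\<^sup>L M (h n)) \<longlonglongrightarrow> integral\<^sup>L M (\<lambda>x. 0::real)"
  proof (rule integral_dominated_convergence[where w = g])
    show "AE x in M. (\<lambda>n. h n x) \<longlonglongrightarrow> 0"
    proof (rule AE_I2)
      fix x
      obtain N where N: "g x \<le> real N" using real_arch_simple by blast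
      have "\<forall>\<^sub>F n in sequentially. h n x = 0"
        unfolding eventually_sequentially
      proof (intro exI[of _ N] allI impI)
        fix n assume "N \<le> n"
        then have "g x \<le> real n" using N by linarith
        then show "h n x = 0" by (simp add: h_def)
      qed
      then show "(\<lambda>n. h n x) \<longlonglongrightarrow> 0" by (rule tendsto_eventually)
    qed
    show "AE x in M. norm (h n x) \<le> g x" for n
      by (rule AE_I2) (auto simp: h_def g_def)
  qed (use g hm in auto)
  then have "(\<lambda>n. integral\<^sup>L M (h n)) \<longlonglongrightarrow> 0" by simp
  then have "\<forall>\<^sub>F n in sequentially. integral\<^sup>L M (h n) < e / 2" using e by (intro order_tendstoD) auto
  then obtain n where n: "integral\<^sup>L M (h n) < e / 2" by (auto simp: eventually_sequentially)
  define d where "d = e / (2 * (real n + 1))"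
  have d: "d > 0" using e by (simp add: d_def)
  show ?thesis
  proof (intro exI[of _ d] conjI ballI impI d)
    fix A assume A: "A \<in> sets M" "measure M A < d"
    have i1: "integrable M (\<lambda>x. min (g x) (real n) * indicator A x)"
      using A mint by (intro integrable_real_mult_indicator)
    have i2: "integrable M (\<lambda>x. h n x * indicator A x)"
      using A hint by (intro integrable_real_mult_indicator)
    have i3: "integrable M (\<lambda>x. real n * indicator A x)"
      using A by (intro integrable_real_mult_indicator integrable_const)
    have "(\<integral>x. g x * indicator A x \<partial>M) = (\<integral>x. min (g x) (real n) * indicator A x + h n x * indicator A x \<partial>M)"
      by (simp add: h_def algebra_simps)
    also have "\<dots> = (\<integral>x. min (g x) (real n) * indicator A x \<partial>M) + (\<integral>x. h n x * indicator A x \<partial>M)"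
      using i1 i2 by (rule Bochner_Integration.integral_add)
    also have "(\<integral>x. min (g x) (real n) * indicator A x \<partial>M) \<le> (\<integral>x. real n * indicator A x \<partial>M)"
      using i1 i3 by (intro integral_mono) (auto simp: indicator_def)
    also have "(\<integral>x. real n * indicator A x \<partial>M) = real n * measure M A"
      using A by simp
    also have "(\<integral>x. h n x * indicator A x \<partial>M) \<le> integral\<^sup>L M (h n)"
      using i2 hint by (intro integral_mono) (auto simp: indicator_def h_def)
    finally have "(\<integral>x. g x * indicator A x \<partial>M) \<le> real n * measure M A + integral\<^sup>L M (h n)" by simp
    moreover have "real n * measure M A \<le> real n * d" using A by (intro mult_left_mono) auto
    moreover have "real n * d \<le> e / 2" using e by (simp add: d_def field_simps)
    ultimately show "(\<integral>x. norm (f x) * indicator A x \<partial>M) < e" using n by (simp add: g_def)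
  qed
qed



abbreviation Phi :: "nat \<Rightarrow> ((nat \<Rightarrow> real) \<Rightarrow> complex) \<Rightarrow> (nat \<Rightarrow> real set) \<Rightarrow> complex" where
  "Phi m f E \<equiv> (\<integral>x\<in>(\<Pi>\<^sub>E i\<in>{..<m}. E i). f x \<partial>unit_cube m)"

lemma UC_prob: "prob_space (unit_cube m)"
  unfolding unit_cube_def by (intro prob_space_PiM prob_LL)

lemma UC_fpps: "finite_product_prob_space (\<lambda>_. LL) {..<m::nat}"
  unfolding finite_product_prob_space_def finite_product_sigma_finite_def product_prob_space_def
    product_prob_space_axioms_def product_sigma_finite_def finite_product_sigma_finite_axioms_def
  by (simp add: prob_LL prob_space_imp_sigma_finite)

lemma UC_space: "space (unit_cube m) = (\<Pi>\<^sub>E i\<in>{..<m}. {0..1})"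
  by (simp add: unit_cube_def space_PiM)

lemma UC_sets: "meas m E \<Longrightarrow> (\<Pi>\<^sub>E i\<in>{..<m}. E i) \<in> sets (unit_cube m)"
  unfolding unit_cube_def meas_def by (intro sets_PiM_I_finite) auto

lemma UC_measure: "meas m E \<Longrightarrow> measure (unit_cube m) (\<Pi>\<^sub>E i\<in>{..<m}. E i) = (\<Prod>i<m. lam (E i))"
  unfolding unit_cube_def meas_def
  by (rule finite_product_prob_space.finite_measure_PiM_emb[OF UC_fpps]) auto

lemma UC_setint: fixes f :: "(nat \<Rightarrow> real) \<Rightarrow> complex" assumes "integrable (unit_cube m) f" "A \<in> sets (unit_cube m)" shows "set_integrable (unit_cube m) A f"
  unfolding set_integrable_def by (rule integrable_mult_indicator[OF assms(2,1)])

lemma prod_le_one_factor: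
  fixes x :: "nat \<Rightarrow> real"
  assumes "finite I" "k \<in> I" "\<And>i. i \<in> I \<Longrightarrow> 0 \<le> x i \<and> x i \<le> 1"
  shows "(\<Prod>i\<in>I. x i) \<le> x k"
proof -
  have "(\<Prod>i\<in>I. x i) = x k * (\<Prod>i\<in>I - {k}. x i)" using assms by (simp add: prod.remove)
  also have "\<dots> \<le> x k * 1" using assms by (intro mult_left_mono prod_le_1) auto
  finally show ?thesis by simp
qed

lemma PiE_upd_Un: "k \<in> I \<Longrightarrow> PiE I (E(k:=X\<union>Y)) = PiE I (E(k:=X)) \<union> PiE I (E(k:=Y))"
  unfolding PiE_def Pi_def by auto
lemma PiE_upd_disj: "k \<in> I \<Longrightarrow> X \<inter> Y = {} \<Longrightarrow> PiE I (E(k:=X)) \<inter> PiE I (E(k:=Y)) = {}"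
  unfolding PiE_def Pi_def by auto

lemma Phi_ADD:
  assumes f: "integrable (unit_cube m) f"
  shows "ADD m (Phi m f)"
  unfolding ADD_def
proof (intro allI impI)
  fix E k X Y assume H: "k < m" "\<forall>i<m. i \<noteq> k \<longrightarrow> E i \<in> sets LL" "X \<in> sets LL" "Y \<in> sets LL" "X \<inter> Y = {}"
  have mX: "meas m (E(k := X))" "meas m (E(k := Y))" using H by (auto simp: meas_def)
  have eq: "(\<Pi>\<^sub>E i\<in>{..<m}. (E(k := X \<union> Y)) i) = (\<Pi>\<^sub>E i\<in>{..<m}. (E(k := X)) i) \<union> (\<Pi>\<^sub>E i\<in>{..<m}. (E(k := Y)) i)"
    using H(1) by (intro PiE_upd_Un) auto
  have dj: "(\<Pi>\<^sub>E i\<in>{..<m}. (E(k := X)) i) \<inter> (\<Pi>\<^sub>E i\<in>{..<m}. (E(k := Y)) i) = {}"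
    using H(1,5) by (intro PiE_upd_disj) auto
  show "Phi m f (E(k := X \<union> Y)) = Phi m f (E(k := X)) + Phi m f (E(k := Y))"
    unfolding eq by (rule set_integral_Un[OF dj UC_setint[OF f UC_sets[OF mX(1)]] UC_setint[OF f UC_sets[OF mX(2)]]])
qed

lemma Phi_CONT:
  assumes f: "integrable (unit_cube m) f"
  shows "CONT m (Phi m f)"
  unfolding CONT_def
proof (intro allI impI)
  fix e :: real assume e: "e > 0"
  interpret UC: prob_space "unit_cube m" by (rule UC_prob)
  obtain d where d: "d > 0" "\<forall>A\<in>sets (unit_cube m). measure (unit_cube m) A < d \<longrightarrow> (\<integral>x. norm (f x) * indicator A x \<partial>unit_cube m) < e"
    using abs_cont[OF UC.finite_measure_axioms f e] by blast
  show "\<exists>d>0. \<forall>E k. k < m \<longrightarrow> meas m E \<longrightarrow> lam (E k) < d \<longrightarrow> norm (Phi m f E) < e"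
  proof (intro exI[of _ d] conjI allI impI d(1))
    fix E k assume H: "k < m" "meas m E" "lam (E k) < d"
    let ?A = "\<Pi>\<^sub>E i\<in>{..<m}. E i"
    have A: "?A \<in> sets (unit_cube m)" by (rule UC_sets[OF H(2)])
    have "measure (unit_cube m) ?A = (\<Prod>i<m. lam (E i))" by (rule UC_measure[OF H(2)])
    also have "\<dots> \<le> lam (E k)" using H(1) by (intro prod_le_one_factor) auto
    finally have "measure (unit_cube m) ?A < d" using H(3) by simp
    then have lt: "(\<integral>x. norm (f x) * indicator ?A x \<partial>unit_cube m) < e" using d(2) A by blast
    have "norm (Phi m f E) \<le> (\<integral>x. norm (indicator ?A x *\<^sub>R f x) \<partial>unit_cube m)"
      unfolding set_lebesgue_integral_def by (rule integral_norm_bound)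
    also have "\<dots> = (\<integral>x. norm (f x) * indicator ?A x \<partial>unit_cube m)"
      by (intro Bochner_Integration.integral_cong) (auto simp: indicator_def)
    finally show "norm (Phi m f E) < e" using lt by simp
  qed
qed



lemma UC_reindex_meas:
  assumes \<sigma>: "\<sigma> permutes {..<m}"
  shows "(\<lambda>\<omega>. \<lambda>n\<in>{..<m}. \<omega> (\<sigma> n)) \<in> measurable (unit_cube m) (unit_cube m)"
  unfolding unit_cube_def
proof (rule measurable_restrict)
  fix n assume "n \<in> {..<m}"
  then have "\<sigma> n \<in> {..<m}" using permutes_in_image[OF \<sigma>] by auto
  then show "(\<lambda>\<omega>. \<omega> (\<sigma> n)) \<in> measurable (Pi\<^sub>M {..<m} (\<lambda>_. LL)) LL"
    by (rule measurable_component_singleton)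
qed

lemma UC_reindex_distr:
  assumes \<sigma>: "\<sigma> permutes {..<m}"
  shows "distr (unit_cube m) (unit_cube m) (\<lambda>\<omega>. \<lambda>n\<in>{..<m}. \<omega> (\<sigma> n)) = unit_cube m"
proof -
  have "inj_on \<sigma> {..<m}" using permutes_inj[OF \<sigma>] by (simp add: inj_on_def inj_def)
  moreover have "\<sigma> \<in> {..<m} \<rightarrow> {..<m}" using permutes_in_image[OF \<sigma>] by auto
  ultimately show ?thesis
    using distr_PiM_reindex[of "{..<m}" "\<lambda>_. LL" \<sigma> "{..<m}"] prob_LL unfolding unit_cube_def by simp
qed

lemma Phi_perm:
  fixes f :: "(nat \<Rightarrow> real) \<Rightarrow> complex"
  assumes \<sigma>: "\<sigma> permutes {..<m}" and fs: "\<forall>x\<in>space (unit_cube m). f (x \<circ> \<sigma>) = f x"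
    and f: "integrable (unit_cube m) f" and E: "meas m E"
  shows "Phi m f E = Phi m f (E \<circ> inv \<sigma>)"
proof -
  let ?T = "\<lambda>\<omega>. \<lambda>n\<in>{..<m}. \<omega> (\<sigma> n)"
  let ?g = "\<lambda>y. indicator (\<Pi>\<^sub>E i\<in>{..<m}. E i) y *\<^sub>R f y"
  have gm: "?g \<in> borel_measurable (unit_cube m)"
    using f UC_sets[OF E] by (intro borel_measurable_scaleR borel_measurable_indicator) auto
  have "Phi m f E = integral\<^sup>L (distr (unit_cube m) (unit_cube m) ?T) ?g"
    unfolding set_lebesgue_integral_def UC_reindex_distr[OF \<sigma>] ..
  also have "\<dots> = (\<integral>\<omega>. ?g (?T \<omega>) \<partial>unit_cube m)"
    by (rule integral_distr[OF UC_reindex_meas[OF \<sigma>] gm])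
  also have "\<dots> = Phi m f (E \<circ> inv \<sigma>)"
    unfolding set_lebesgue_integral_def
  proof (rule Bochner_Integration.integral_cong[OF refl])
    fix \<omega> assume \<omega>: "\<omega> \<in> space (unit_cube m)"
    then have exw: "\<omega> \<in> extensional {..<m}" by (simp add: UC_space PiE_def)
    have Tw: "?T \<omega> = \<omega> \<circ> \<sigma>"
    proof (rule ext)
      fix n show "?T \<omega> n = (\<omega> \<circ> \<sigma>) n"
        using exw permutes_not_in[OF \<sigma>, of n] by (auto simp: extensional_def)
    qed
    have "\<omega> \<circ> \<sigma> \<in> (\<Pi>\<^sub>E i\<in>{..<m}. E i) \<longleftrightarrow> \<omega> \<in> (\<Pi>\<^sub>E i\<in>{..<m}. (E \<circ> inv \<sigma>) i)"
    proof
      assume H: "\<omega> \<circ> \<sigma> \<in> (\<Pi>\<^sub>E i\<in>{..<m}. E i)"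
      show "\<omega> \<in> (\<Pi>\<^sub>E i\<in>{..<m}. (E \<circ> inv \<sigma>) i)"
        unfolding PiE_iff
      proof (intro conjI ballI exw)
        fix j assume j: "j \<in> {..<m}"
        have "inv \<sigma> j \<in> {..<m}" using permutes_in_image[OF permutes_inv[OF \<sigma>]] j by auto
        moreover have "\<sigma> (inv \<sigma> j) = j" using permutes_inverses(1)[OF \<sigma>] by simp
        moreover have "\<omega> (\<sigma> (inv \<sigma> j)) \<in> E (inv \<sigma> j)" using H calculation(1) by (auto simp: PiE_iff)
        ultimately show "\<omega> j \<in> (E \<circ> inv \<sigma>) j" by simp
      qed
    next
      assume H: "\<omega> \<in> (\<Pi>\<^sub>E i\<in>{..<m}. (E \<circ> inv \<sigma>) i)"
      show "\<omega> \<circ> \<sigma> \<in> (\<Pi>\<^sub>E i\<in>{..<m}. E i)"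
        unfolding PiE_iff
      proof (intro conjI ballI)
        fix i assume i: "i \<in> {..<m}"
        have "\<sigma> i \<in> {..<m}" using permutes_in_image[OF \<sigma>] i by auto
        moreover have "inv \<sigma> (\<sigma> i) = i" using permutes_inverses(2)[OF \<sigma>] by simp
        moreover have "\<omega> (\<sigma> i) \<in> E (inv \<sigma> (\<sigma> i))" using H calculation(1) by (auto simp: PiE_iff)
        ultimately show "(\<omega> \<circ> \<sigma>) i \<in> E i" by simp
      next
        show "\<omega> \<circ> \<sigma> \<in> extensional {..<m}"
          using exw permutes_not_in[OF \<sigma>] by (auto simp: extensional_def)
      qed
    qed
    then show "?g (?T \<omega>) = indicator (\<Pi>\<^sub>E i\<in>{..<m}. (E \<circ> inv \<sigma>) i) \<omega> *\<^sub>R f \<omega>"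
      unfolding Tw using fs \<omega> by (simp add: indicator_def)
  qed
  finally show ?thesis .
qed

lemma Phi_SYM:
  fixes f :: "(nat \<Rightarrow> real) \<Rightarrow> complex"
  assumes fs: "\<forall>\<sigma>. \<sigma> permutes {..<m} \<longrightarrow> (\<forall>x\<in>space (unit_cube m). f (x \<circ> \<sigma>) = f x)"
    and f: "integrable (unit_cube m) f"
  shows "SYM m (Phi m f)"
  unfolding SYM_def
proof (intro allI impI)
  fix \<sigma> E assume \<sigma>: "\<sigma> permutes {..<m}" and E: "meas m E"
  have E': "meas m (E \<circ> \<sigma>)" using E permutes_in_image[OF \<sigma>] by (auto simp: meas_def)
  have "Phi m f (E \<circ> \<sigma>) = Phi m f (E \<circ> \<sigma> \<circ> inv \<sigma>)"
    using fs \<sigma> by (intro Phi_perm[OF \<sigma> _ f E']) auto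
  also have "E \<circ> \<sigma> \<circ> inv \<sigma> = E \<circ> (\<sigma> \<circ> inv \<sigma>)" by (simp add: o_assoc)
  also have "\<dots> = E" using permutes_inv_o(1)[OF \<sigma>] by simp
  finally show "Phi m f (E \<circ> \<sigma>) = Phi m f E" .
qed



definition Jn :: "nat \<Rightarrow> nat \<Rightarrow> real set" where
  "Jn n k = {0..1} \<inter> {real k / real n ..} \<inter> (if k + 1 = n then UNIV else {..< (real k + 1) / real n})"

lemma Jn_sets: "Jn n k \<in> sets LL"
proof -
  have B: "{real k / real n ..} \<inter> (if k + 1 = n then UNIV else {..< (real k + 1) / real n}) \<in> sets borel"
    by (cases "k + 1 = n") auto
  have S: "{0..1::real} \<in> sets LL" by simp
  show ?thesis unfolding Jn_def Int_assoc by (rule LL_Int_borel[OF S B])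
qed

lemma Jn_small: assumes "0 < n" "k < n" shows "lam (Jn n k) \<le> 1 / real n"
proof -
  have "Jn n k \<subseteq> {real k / real n .. (real k + 1) / real n}"
  proof
    fix t assume t: "t \<in> Jn n k"
    show "t \<in> {real k / real n .. (real k + 1) / real n}"
    proof (cases "k + 1 = n")
      case True
      then have "real k + 1 = real n" by linarith
      then have eq: "(real k + 1) / real n = 1" using assms by simp
      have "t \<le> 1" "real k / real n \<le> t" using t by (auto simp: Jn_def)
      then show ?thesis using eq by simp
    qed (use t in \<open>auto simp: Jn_def\<close>)
  qed
  moreover have "real k / real n \<le> (real k + 1) / real n" using assms by (simp add: divide_right_mono)
  ultimately have "lam (Jn n k) \<le> (real k + 1) / real n - real k / real n"
    by (intro lam_le_Icc Jn_sets)
  also have "\<dots> = 1 / real n" using assms by (simp add: field_simps)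
  finally show ?thesis .
qed

lemma Jn_disj: assumes "0 < n" "k < n" "k' < n" "k \<noteq> k'" shows "Jn n k \<inter> Jn n k' = {}"
proof -
  have *: "Jn n a \<inter> Jn n b = {}" if "a < b" "b < n" for a b
  proof -
    have "a + 1 \<noteq> n" using that by simp
    moreover have "(real a + 1) / real n \<le> real b / real n"
      using that assms by (intro divide_right_mono) auto
    ultimately show ?thesis by (auto simp: Jn_def)
  qed
  show ?thesis
  proof (cases "k < k'")
    case True then show ?thesis using * assms by blast
  next
    case False then have "k' < k" using assms by simp
    then show ?thesis using *[of k' k] assms by blast
  qed
qed

lemma Jn_cover: assumes "0 < n" "t \<in> {0..1}" shows "\<exists>k<n. t \<in> Jn n k"
proof -
  define k where "k = min (n - 1) (nat \<lfloor>real n * t\<rfloor>)"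
  have k: "k < n" using assms by (simp add: k_def)
  have nt: "0 \<le> real n * t" using assms by simp
  have fl: "real (nat \<lfloor>real n * t\<rfloor>) \<le> real n * t" "real n * t < real (nat \<lfloor>real n * t\<rfloor>) + 1"
    using nt by linarith+
  have "real k \<le> real n * t" using fl(1) by (simp add: k_def)
  then have l: "real k / real n \<le> t" using assms by (simp add: divide_le_eq mult.commute)
  have u: "t < (real k + 1) / real n" if "k + 1 \<noteq> n"
  proof -
    have "k = nat \<lfloor>real n * t\<rfloor>" using that k by (auto simp: k_def min_def split: if_splits)
    then have "real n * t < real k + 1" using fl(2) by simp
    then show ?thesis using assms by (simp add: less_divide_eq mult.commute)
  qed
  show ?thesis using k l u assms(2) by (auto simp: Jn_def)
qed



lemma prod_le_two_factors:
  fixes x :: "nat \<Rightarrow> real"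
  assumes "finite I" "i \<in> I" "j \<in> I" "i \<noteq> j" "\<And>r. r \<in> I \<Longrightarrow> 0 \<le> x r \<and> x r \<le> 1"
  shows "(\<Prod>r\<in>I. x r) \<le> x i * x j"
proof -
  have "(\<Prod>r\<in>I. x r) = x i * (\<Prod>r\<in>I - {i}. x r)" using assms by (simp add: prod.remove)
  also have "(\<Prod>r\<in>I - {i}. x r) \<le> x j" using assms by (intro prod_le_one_factor) auto
  then have "x i * (\<Prod>r\<in>I - {i}. x r) \<le> x i * x j" using assms by (intro mult_left_mono) auto
  finally show ?thesis .
qed

lemma box_zero:
  fixes f :: "(nat \<Rightarrow> real) \<Rightarrow> complex"
  assumes f: "integrable (unit_cube m) f" and \<delta>: "\<delta> > 0"
    and van: "\<forall>B. meas m B \<longrightarrow> disj m B \<longrightarrow> (\<forall>i<m. lam (B i) \<le> \<delta>) \<longrightarrow> Phi m f B = 0"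
    and E: "meas m E"
  shows "Phi m f E = 0"
proof -
  interpret UC: prob_space "unit_cube m" by (rule UC_prob)
  have small: "norm (Phi m f E) < e" if e: "e > 0" for e
  proof -
    obtain d where d: "d > 0" "\<forall>A\<in>sets (unit_cube m). measure (unit_cube m) A < d \<longrightarrow> (\<integral>x. norm (f x) * indicator A x \<partial>unit_cube m) < e"
      using abs_cont[OF UC.finite_measure_axioms f e] by blast
    define n where "n = nat \<lceil>max (1 / \<delta>) (real m * real m / d)\<rceil> + 1"
    have n0: "0 < n" by (simp add: n_def)
    have n1: "1 / \<delta> < real n" "real m * real m / d < real n" unfolding n_def by linarith+
    have n\<delta>: "1 / real n \<le> \<delta>" using n1(1) \<delta> n0 by (simp add: field_simps)
    have nd: "real m * real m / real n < d" using n1(2) d(1) n0 by (simp add: field_simps)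
    define Ks where "Ks = (\<Pi>\<^sub>E i\<in>{..<m}. {..<n})"
    define P where "P k = (\<Pi>\<^sub>E i\<in>{..<m}. E i \<inter> Jn n (k i))" for k
    have Ks: "finite Ks" by (simp add: Ks_def finite_PiE)
    have Pmeas: "meas m (\<lambda>i. E i \<inter> Jn n (k i))" for k using E Jn_sets by (auto simp: meas_def)
    have Psets: "P k \<in> sets (unit_cube m)" for k unfolding P_def by (rule UC_sets[OF Pmeas])
    have Esub: "E i \<subseteq> {0..1}" if "i < m" for i using E that LL_sub by (auto simp: meas_def)
    have cover: "(\<Pi>\<^sub>E i\<in>{..<m}. E i) = (\<Union>k\<in>Ks. P k)"
    proof
      show "(\<Union>k\<in>Ks. P k) \<subseteq> (\<Pi>\<^sub>E i\<in>{..<m}. E i)" by (auto simp: P_def PiE_iff)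
    next
      show "(\<Pi>\<^sub>E i\<in>{..<m}. E i) \<subseteq> (\<Union>k\<in>Ks. P k)"
      proof
        fix x assume x: "x \<in> (\<Pi>\<^sub>E i\<in>{..<m}. E i)"
        define k where "k = (\<lambda>i\<in>{..<m}. SOME l. l < n \<and> x i \<in> Jn n l)"
        have kk: "k i < n \<and> x i \<in> Jn n (k i)" if "i < m" for i
        proof -
          have "x i \<in> E i" using x that by (auto simp: PiE_iff)
          then have "x i \<in> {0..1}" using Esub[OF that] by blast
          then have "\<exists>l. l < n \<and> x i \<in> Jn n l" using Jn_cover[OF n0] by blast
          then have "(SOME l. l < n \<and> x i \<in> Jn n l) < n \<and> x i \<in> Jn n (SOME l. l < n \<and> x i \<in> Jn n l)"
            by (rule someI_ex)
          then show ?thesis unfolding k_def using that by simp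
        qed
        have "k \<in> Ks" using kk by (auto simp: Ks_def k_def PiE_iff)
        moreover have "x \<in> P k" using x kk by (auto simp: P_def PiE_iff)
        ultimately show "x \<in> (\<Union>k\<in>Ks. P k)" by blast
      qed
    qed
    have dfam: "disjoint_family_on P S" if "S \<subseteq> Ks" for S
      unfolding disjoint_family_on_def
    proof (intro ballI impI)
      fix k k' assume kk: "k \<in> S" "k' \<in> S" "k \<noteq> k'"
      then have "k \<in> Ks" "k' \<in> Ks" using that by auto
      then obtain i where i: "i < m" "k i \<noteq> k' i" using kk(3)
        by (auto simp: Ks_def PiE_iff extensional_def fun_eq_iff) (metis lessThan_iff)
      have "k i < n" "k' i < n" using \<open>k \<in> Ks\<close> \<open>k' \<in> Ks\<close> i by (auto simp: Ks_def PiE_iff)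
      then have "Jn n (k i) \<inter> Jn n (k' i) = {}" using Jn_disj n0 i by blast
      then show "P k \<inter> P k' = {}" using i by (auto simp: P_def PiE_iff)
    qed
    have setint: "set_integrable (unit_cube m) A f" if "A \<in> sets (unit_cube m)" for A
      by (rule UC_setint[OF f that])
    have setintP: "set_integrable (unit_cube m) (P k) f" for k by (rule setint[OF Psets])
    define Ki where "Ki = {k\<in>Ks. inj_on k {..<m}}"
    have Ki: "Ki \<subseteq> Ks" "finite Ki" using Ks by (auto simp: Ki_def)
    have "Phi m f E = (\<Sum>k\<in>Ks. set_lebesgue_integral (unit_cube m) (P k) f)"
      unfolding cover by (rule set_integral_finite_Union[OF Ks dfam[OF order_refl]]) (auto intro: setintP Psets)
    also have "\<dots> = (\<Sum>k\<in>Ks - Ki. set_lebesgue_integral (unit_cube m) (P k) f) + (\<Sum>k\<in>Ki. set_lebesgue_integral (unit_cube m) (P k) f)"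
      by (rule sum.subset_diff[OF Ki(1) Ks])
    also have "(\<Sum>k\<in>Ki. set_lebesgue_integral (unit_cube m) (P k) f) = 0"
    proof (rule sum.neutral, rule ballI)
      fix k assume k: "k \<in> Ki"
      have "disj m (\<lambda>i. E i \<inter> Jn n (k i))"
        unfolding disj_def
      proof (intro allI impI)
        fix i j assume ij: "i < m" "j < m" "i \<noteq> j"
        then have "k i \<noteq> k j" using k by (auto simp: Ki_def inj_on_def)
        moreover have "k i < n" "k j < n" using k ij by (auto simp: Ki_def Ks_def PiE_iff)
        ultimately have "Jn n (k i) \<inter> Jn n (k j) = {}" using Jn_disj n0 by blast
        then show "E i \<inter> Jn n (k i) \<inter> (E j \<inter> Jn n (k j)) = {}" by auto
      qed
      moreover have "\<forall>i<m. lam (E i \<inter> Jn n (k i)) \<le> \<delta>"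
      proof (intro allI impI)
        fix i assume i: "i < m"
        have ki: "k i < n" using k i by (auto simp: Ki_def Ks_def PiE_iff)
        have "lam (E i \<inter> Jn n (k i)) \<le> lam (Jn n (k i))"
          using E i Jn_sets by (intro LLp.finite_measure_mono) (auto simp: meas_def)
        also have "\<dots> \<le> 1 / real n" by (rule Jn_small[OF n0 ki])
        finally show "lam (E i \<inter> Jn n (k i)) \<le> \<delta>" using n\<delta> by simp
      qed
      ultimately show "set_lebesgue_integral (unit_cube m) (P k) f = 0"
        using van Pmeas unfolding P_def by blast
    qed
    also have "(\<Sum>k\<in>Ks - Ki. set_lebesgue_integral (unit_cube m) (P k) f) = set_lebesgue_integral (unit_cube m) (\<Union>k\<in>Ks - Ki. P k) f"
      by (rule set_integral_finite_Union[OF finite_Diff[OF Ks] dfam[OF Diff_subset], symmetric]) (auto intro: setintP Psets)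
    finally have PhiA: "Phi m f E = set_lebesgue_integral (unit_cube m) (\<Union>k\<in>Ks - Ki. P k) f" by simp
    define A where "A = (\<Union>k\<in>Ks - Ki. P k)"
    have A: "A \<in> sets (unit_cube m)" unfolding A_def using Ks Psets by auto
    define G where "G = {(i, j, l). i < m \<and> j < m \<and> i \<noteq> j \<and> l < n}"
    define C where "C = (\<lambda>(i::nat, j::nat, l::nat). \<Pi>\<^sub>E r\<in>{..<m}. if r = i \<or> r = j then Jn n l else {0..1})"
    have G: "G \<subseteq> {..<m} \<times> {..<m} \<times> {..<n}" by (auto simp: G_def)
    then have Gf: "finite G" by (rule finite_subset) auto
    have "card G \<le> m * m * n"
      using card_mono[OF _ G] by (simp add: card_cartesian_product)
    then have "real (card G) \<le> real (m * m * n)" by (rule of_nat_mono)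
    then have cardG: "real (card G) \<le> real m * real m * real n" by simp
    have Cmeas: "meas m (\<lambda>r. if r = i \<or> r = j then Jn n l else {0..1})" for i j l
      using Jn_sets by (auto simp: meas_def)
    have Csets: "C g \<in> sets (unit_cube m)" for g
      unfolding C_def by (cases g) (auto intro: UC_sets[OF Cmeas])
    define U where "U = (\<Union>g\<in>G. C g)"
    have U: "U \<in> sets (unit_cube m)" unfolding U_def using Gf Csets by auto
    have AU: "A \<subseteq> U"
    proof
      fix x assume "x \<in> A"
      then obtain k where k: "k \<in> Ks" "k \<notin> Ki" "x \<in> P k" by (auto simp: A_def)
      then obtain i j where ij: "i < m" "j < m" "i \<noteq> j" "k i = k j"
        by (auto simp: Ki_def inj_on_def)
      have l: "k i < n" using k ij by (auto simp: Ks_def PiE_iff)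
      have "(i, j, k i) \<in> G" using ij l by (simp add: G_def)
      have xr: "\<forall>r<m. x r \<in> E r \<and> x r \<in> Jn n (k r)" "x \<in> extensional {..<m}"
        using k(3) unfolding P_def by (auto simp: PiE_iff)
      have "x \<in> C (i, j, k i)"
        unfolding C_def split PiE_iff
      proof (intro conjI ballI xr(2))
        fix r assume r: "r \<in> {..<m}"
        show "x r \<in> (if r = i \<or> r = j then Jn n (k i) else {0..1})"
        proof (cases "r = i \<or> r = j")
          case True then show ?thesis using xr(1) ij by auto
        next
          case False
          have "x r \<in> E r" using xr(1) r by auto
          moreover have "E r \<subseteq> {0..1}" using Esub r by auto
          ultimately show ?thesis using False by auto
        qed
      qed
      moreover note \<open>(i, j, k i) \<in> G\<close>
      ultimately show "x \<in> U" unfolding U_def by blast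
    qed
    have mC: "measure (unit_cube m) (C g) \<le> 1 / real n * (1 / real n)" if g: "g \<in> G" for g
    proof -
      obtain i j l where gij: "g = (i, j, l)" "i < m" "j < m" "i \<noteq> j" "l < n" using g by (auto simp: G_def)
      let ?x = "\<lambda>r. lam (if r = i \<or> r = j then Jn n l else {0..1})"
      have "measure (unit_cube m) (C g) = (\<Prod>r<m. ?x r)"
        unfolding gij(1) C_def by (simp add: UC_measure[OF Cmeas])
      also have "\<dots> \<le> ?x i * ?x j" using gij by (intro prod_le_two_factors) auto
      also have "\<dots> = lam (Jn n l) * lam (Jn n l)" by simp
      also have "\<dots> \<le> 1 / real n * (1 / real n)"
        using Jn_small[OF n0 gij(5)] by (intro mult_mono) auto
      finally show ?thesis .
    qed
    have "measure (unit_cube m) U \<le> (\<Sum>g\<in>G. measure (unit_cube m) (C g))"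
      unfolding U_def by (rule measure_UNION_le[OF Gf]) (use Csets in auto)
    also have "\<dots> \<le> (\<Sum>g\<in>G. 1 / real n * (1 / real n))" by (rule sum_mono[OF mC])
    also have "\<dots> = real (card G) / (real n * real n)" by simp
    also have "\<dots> \<le> real m * real m * real n / (real n * real n)"
      using cardG by (intro divide_right_mono) auto
    also have "\<dots> = real m * real m / real n" using n0 by simp
    finally have "measure (unit_cube m) U < d" using nd by simp
    then have Ue: "(\<integral>x. norm (f x) * indicator U x \<partial>unit_cube m) < e" using d(2) U by blast
    have nf: "integrable (unit_cube m) (\<lambda>x. norm (f x))" using f by (rule integrable_norm)
    have "norm (Phi m f E) = norm (set_lebesgue_integral (unit_cube m) A f)" using PhiA by (simp add: A_def)
    also have "\<dots> \<le> (\<integral>x. norm (indicator A x *\<^sub>R f x) \<partial>unit_cube m)"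
      unfolding set_lebesgue_integral_def by (rule integral_norm_bound)
    also have "\<dots> = (\<integral>x. norm (f x) * indicator A x \<partial>unit_cube m)"
      by (intro Bochner_Integration.integral_cong) (auto simp: indicator_def)
    also have "\<dots> \<le> (\<integral>x. norm (f x) * indicator U x \<partial>unit_cube m)"
      using AU by (intro integral_mono integrable_real_mult_indicator A U nf)
        (auto simp: indicator_def)
    finally show ?thesis using Ue by simp
  qed
  show ?thesis
  proof (rule ccontr)
    assume "Phi m f E \<noteq> 0"
    then have "norm (Phi m f E) > 0" by simp
    then show False using small[of "norm (Phi m f E)"] by simp
  qed
qed



lemma real_AE_zero:
  fixes g :: "'a \<Rightarrow> real"
  assumes g: "integrable N g" and z: "\<And>Z. Z \<in> sets N \<Longrightarrow> (\<integral>x. g x * indicator Z x \<partial>N) = 0"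
  shows "AE x in N. g x = 0"
proof -
  have gm: "g \<in> borel_measurable N" using g by auto
  have pos: "AE x in N. g x \<le> 0"
  proof -
    define Z where "Z = {x\<in>space N. 0 < g x}"
    have Z: "Z \<in> sets N" unfolding Z_def using gm by measurable
    have i: "integrable N (\<lambda>x. g x * indicator Z x)" by (rule integrable_real_mult_indicator[OF Z g])
    have "(\<integral>x. g x * indicator Z x \<partial>N) = 0" using z[OF Z] .
    moreover have "AE x in N. 0 \<le> g x * indicator Z x" by (rule AE_I2) (auto simp: Z_def indicator_def)
    ultimately have "AE x in N. g x * indicator Z x = 0" using integral_nonneg_eq_0_iff_AE[OF i] by simp
    from this AE_space[of N] show ?thesis by eventually_elim (auto simp: Z_def indicator_def split: if_splits)
  qed
  have neg: "AE x in N. 0 \<le> g x"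
  proof -
    define Z where "Z = {x\<in>space N. g x < 0}"
    have Z: "Z \<in> sets N" unfolding Z_def using gm by measurable
    have i: "integrable N (\<lambda>x. - g x * indicator Z x)"
      using integrable_real_mult_indicator[OF Z integrable_minus[OF g]] by simp
    have "(\<integral>x. - g x * indicator Z x \<partial>N) = 0" using z[OF Z] by simp
    moreover have "AE x in N. 0 \<le> - g x * indicator Z x" by (rule AE_I2) (auto simp: Z_def indicator_def)
    ultimately have "AE x in N. - g x * indicator Z x = 0" using integral_nonneg_eq_0_iff_AE[OF i] by simp
    from this AE_space[of N] show ?thesis by eventually_elim (auto simp: Z_def indicator_def split: if_splits)
  qed
  from pos neg show ?thesis by eventually_elim simp
qed

lemma complex_AE_zero:
  fixes f :: "'a \<Rightarrow> complex"
  assumes f: "integrable N f" and z: "\<And>Z. Z \<in> sets N \<Longrightarrow> set_lebesgue_integral N Z f = 0"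
  shows "AE x in N. f x = 0"
proof -
  have re: "AE x in N. Re (f x) = 0"
  proof (rule real_AE_zero)
    show "integrable N (\<lambda>x. Re (f x))" using f by (rule integrable_Re)
    fix Z assume Z: "Z \<in> sets N"
    have i: "integrable N (\<lambda>x. indicator Z x *\<^sub>R f x)" by (rule integrable_mult_indicator[OF Z f])
    have "(\<integral>x. Re (f x) * indicator Z x \<partial>N) = (\<integral>x. Re (indicator Z x *\<^sub>R f x) \<partial>N)"
      by (intro Bochner_Integration.integral_cong) (auto simp: indicator_def)
    also have "\<dots> = Re (set_lebesgue_integral N Z f)"
      unfolding set_lebesgue_integral_def by (rule integral_Re[OF i])
    finally show "(\<integral>x. Re (f x) * indicator Z x \<partial>N) = 0" using z[OF Z] by simp
  qed
  have im: "AE x in N. Im (f x) = 0"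
  proof (rule real_AE_zero)
    show "integrable N (\<lambda>x. Im (f x))" using f by (rule integrable_Im)
    fix Z assume Z: "Z \<in> sets N"
    have i: "integrable N (\<lambda>x. indicator Z x *\<^sub>R f x)" by (rule integrable_mult_indicator[OF Z f])
    have "(\<integral>x. Im (f x) * indicator Z x \<partial>N) = (\<integral>x. Im (indicator Z x *\<^sub>R f x) \<partial>N)"
      by (intro Bochner_Integration.integral_cong) (auto simp: indicator_def)
    also have "\<dots> = Im (set_lebesgue_integral N Z f)"
      unfolding set_lebesgue_integral_def by (rule integral_Im[OF i])
    finally show "(\<integral>x. Im (f x) * indicator Z x \<partial>N) = 0" using z[OF Z] by simp
  qed
  from re im show ?thesis by eventually_elim (simp add: complex_eq_iff)
qed

lemma all_sets_zero:
  fixes f :: "(nat \<Rightarrow> real) \<Rightarrow> complex"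
  assumes f: "integrable (unit_cube m) f" and box: "\<And>E. meas m E \<Longrightarrow> Phi m f E = 0"
    and Z: "Z \<in> sets (unit_cube m)"
  shows "set_lebesgue_integral (unit_cube m) Z f = 0"
proof -
  let ?\<Omega> = "\<Pi>\<^sub>E i\<in>{..<m}. space LL"
  let ?G = "prod_algebra {..<m} (\<lambda>_. LL)"
  have S: "sets (unit_cube m) = sigma_sets ?\<Omega> ?G" unfolding unit_cube_def by (rule sets_PiM)
  have Om: "?\<Omega> = space (unit_cube m)" by (simp add: UC_space)
  have Z': "Z \<in> sigma_sets ?\<Omega> ?G" using Z S by simp
  show ?thesis
    using Int_stable_prod_algebra prod_algebra_sets_into_space Z'
  proof (induction rule: sigma_sets_induct_disjoint)
    case (basic A)
    then obtain X where X: "A = (\<Pi>\<^sub>E i\<in>{..<m}. X i)" "X \<in> (\<Pi> j\<in>{..<m}. sets LL)"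
      by (auto simp: prod_algebra_eq_finite)
    have "meas m X" using X(2) by (auto simp: meas_def)
    then show ?case using box X(1) by simp
  next
    case empty then show ?case by (simp add: set_lebesgue_integral_def)
  next
    case (compl A)
    have A: "A \<in> sets (unit_cube m)" using compl(1) S by simp
    have OA: "?\<Omega> - A \<in> sets (unit_cube m)" using A Om by auto
    have sub: "A \<subseteq> ?\<Omega>" using A Om sets.sets_into_space by blast
    have "set_lebesgue_integral (unit_cube m) (A \<union> (?\<Omega> - A)) f
        = set_lebesgue_integral (unit_cube m) A f + set_lebesgue_integral (unit_cube m) (?\<Omega> - A) f"
      by (rule set_integral_Un[OF _ UC_setint[OF f A] UC_setint[OF f OA]]) auto
    moreover have "A \<union> (?\<Omega> - A) = ?\<Omega>" using sub by auto
    moreover have "set_lebesgue_integral (unit_cube m) ?\<Omega> f = 0"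
      using box[of "\<lambda>_. {0..1}"] by (simp add: meas_def)
    ultimately show ?case using compl(2) by simp
  next
    case (union A)
    have A: "\<And>i. A i \<in> sets (unit_cube m)" using union(2) S by auto
    have "set_lebesgue_integral (unit_cube m) (\<Union>i. A i) f = (\<Sum>i. set_lebesgue_integral (unit_cube m) (A i) f)"
    proof (rule lebesgue_integral_countable_add[OF A])
      show "\<And>i j. i \<noteq> j \<Longrightarrow> A i \<inter> A j = {}" using union(1) by (auto simp: disjoint_family_on_def)
      show "set_integrable (unit_cube m) (\<Union>i. A i) f" using A by (intro UC_setint[OF f]) auto
    qed
    also have "\<dots> = 0" using union(3) by simp
    finally show ?case .
  qed
qed



lemma key_AE:
  fixes f :: "(nat \<Rightarrow> real) \<Rightarrow> complex"
  assumes f: "integrable (unit_cube m) f" and \<delta>: "\<delta> > 0"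
    and van: "\<forall>B. meas m B \<longrightarrow> disj m B \<longrightarrow> (\<forall>i<m. lam (B i) \<le> \<delta>) \<longrightarrow> Phi m f B = 0"
  shows "AE x in unit_cube m. f x = 0"
proof (rule complex_AE_zero[OF f])
  fix Z assume "Z \<in> sets (unit_cube m)"
  then show "set_lebesgue_integral (unit_cube m) Z f = 0"
    using all_sets_zero[OF f box_zero[OF f \<delta> van]] by blast
qed

lemma easy_dir:
  fixes f :: "(nat \<Rightarrow> real) \<Rightarrow> complex"
  assumes "AE x in unit_cube m. f x = 0"
  shows "vanishes_on_disjoint_boxes m \<alpha> f"
  unfolding vanishes_on_disjoint_boxes_def set_lebesgue_integral_def
proof (intro allI impI)
  fix A :: "nat \<Rightarrow> real set"
  show "(\<integral>x. indicator (\<Pi>\<^sub>E i\<in>{..<m}. A i) x *\<^sub>R f x \<partial>unit_cube m) = 0"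
  proof (rule integral_eq_zero_AE)
    from assms show "AE x in unit_cube m. indicator (\<Pi>\<^sub>E i\<in>{..<m}. A i) x *\<^sub>R f x = 0"
      by eventually_elim simp
  qed
qed

lemma van_from_def:
  assumes "vanishes_on_disjoint_boxes m \<alpha> f"
  shows "\<forall>A. meas m A \<longrightarrow> disj m A \<longrightarrow> (\<forall>i<m. lam (A i) = \<alpha> i) \<longrightarrow> Phi m f A = 0"
proof (intro allI impI)
  fix A assume A: "meas m A" "disj m A" "\<forall>i<m. lam (A i) = \<alpha> i"
  have "(\<forall>i<m. A i \<in> sets LL \<and> lam (A i) = \<alpha> i) \<and> (\<forall>i<m. \<forall>j<m. i \<noteq> j \<longrightarrow> A i \<inter> A j = {})"
    using A unfolding meas_def disj_def by blast
  then show "Phi m f A = 0"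
    using assms[unfolded vanishes_on_disjoint_boxes_def, rule_format, of A] by blast
qed

lemma GOOD_D:
  assumes "GOOD m \<beta> \<delta>" "V \<in> sets LL" "lam V = (\<Sum>i<m. \<beta> i)" "ADD m \<Phi>" "CONT m \<Phi>" "SYM m \<Phi>"
    "\<forall>A. meas m A \<longrightarrow> disj m A \<longrightarrow> (\<forall>i<m. A i \<subseteq> V \<and> lam (A i) = \<beta> i) \<longrightarrow> \<Phi> A = 0"
  shows "\<forall>B. meas m B \<longrightarrow> disj m B \<longrightarrow> (\<forall>i<m. B i \<subseteq> V \<and> lam (B i) \<le> \<delta>) \<longrightarrow> \<Phi> B = 0"
proof -
  have "\<forall>V \<Phi>. V \<in> sets LL \<longrightarrow> lam V = (\<Sum>i<m. \<beta> i) \<longrightarrow> ADD m \<Phi> \<longrightarrow> CONT m \<Phi> \<longrightarrow> SYM m \<Phi> \<longrightarrow>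
     (\<forall>A. meas m A \<longrightarrow> disj m A \<longrightarrow> (\<forall>i<m. A i \<subseteq> V \<and> lam (A i) = \<beta> i) \<longrightarrow> \<Phi> A = 0) \<longrightarrow>
     (\<forall>B. meas m B \<longrightarrow> disj m B \<longrightarrow> (\<forall>i<m. B i \<subseteq> V \<and> lam (B i) \<le> \<delta>) \<longrightarrow> \<Phi> B = 0)"
    using assms(1) unfolding GOOD_def .
  then show ?thesis using assms(2-7) by blast
qed

theorem mainTheorem3:
  fixes m :: nat
  shows "(\<forall>(\<alpha> :: nat \<Rightarrow> real) (f :: (nat \<Rightarrow> real) \<Rightarrow> complex).
            (\<forall>i<m. 0 < \<alpha> i \<and> \<alpha> i < 1) \<and> (\<Sum>i<m. \<alpha> i) < 1 \<and>
            integrable (unit_cube m) f \<longrightarrow>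
            (vanishes_on_disjoint_boxes m \<alpha> f \<longleftrightarrow> (AE x in unit_cube m. f x = 0)))
       \<and> (\<forall>(\<alpha> :: nat \<Rightarrow> real) (f :: (nat \<Rightarrow> real) \<Rightarrow> complex).
            (\<forall>i<m. 0 < \<alpha> i \<and> \<alpha> i < 1) \<and> (\<Sum>i<m. \<alpha> i) = 1 \<and>
            (\<exists>i<m. \<alpha> i \<noteq> 1 / real m) \<and>
            integrable (unit_cube m) f \<and>
            (\<forall>\<sigma>. \<sigma> permutes {..<m} \<longrightarrow> (\<forall>x\<in>space (unit_cube m). f (x \<circ> \<sigma>) = f x)) \<longrightarrow>
            (vanishes_on_disjoint_boxes m \<alpha> f \<longleftrightarrow> (AE x in unit_cube m. f x = 0)))"
proof (intro conjI allI impI)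
  fix \<alpha> :: "nat \<Rightarrow> real" and f :: "(nat \<Rightarrow> real) \<Rightarrow> complex"
  assume H: "(\<forall>i<m. 0 < \<alpha> i \<and> \<alpha> i < 1) \<and> (\<Sum>i<m. \<alpha> i) < 1 \<and> integrable (unit_cube m) f"
  then have f: "integrable (unit_cube m) f" and pos: "\<forall>i<m. 0 < \<alpha> i" and sum: "(\<Sum>i<m. \<alpha> i) < 1" by auto
  show "vanishes_on_disjoint_boxes m \<alpha> f \<longleftrightarrow> (AE x in unit_cube m. f x = 0)"
  proof
    assume v: "vanishes_on_disjoint_boxes m \<alpha> f"
    have "\<exists>\<delta>>0. \<forall>B. meas m B \<longrightarrow> disj m B \<longrightarrow> (\<forall>i<m. lam (B i) \<le> \<delta>) \<longrightarrow> Phi m f B = 0"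
      by (rule core1[OF Phi_ADD[OF f] Phi_CONT[OF f] pos sum van_from_def[OF v]])
    then obtain \<delta> where "\<delta> > 0" "\<forall>B. meas m B \<longrightarrow> disj m B \<longrightarrow> (\<forall>i<m. lam (B i) \<le> \<delta>) \<longrightarrow> Phi m f B = 0"
      by blast
    then show "AE x in unit_cube m. f x = 0" by (intro key_AE[OF f])
  next
    assume "AE x in unit_cube m. f x = 0"
    then show "vanishes_on_disjoint_boxes m \<alpha> f" by (rule easy_dir)
  qed
next
  fix \<alpha> :: "nat \<Rightarrow> real" and f :: "(nat \<Rightarrow> real) \<Rightarrow> complex"
  assume H: "(\<forall>i<m. 0 < \<alpha> i \<and> \<alpha> i < 1) \<and> (\<Sum>i<m. \<alpha> i) = 1 \<and> (\<exists>i<m. \<alpha> i \<noteq> 1 / real m) \<and>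
            integrable (unit_cube m) f \<and>
            (\<forall>\<sigma>. \<sigma> permutes {..<m} \<longrightarrow> (\<forall>x\<in>space (unit_cube m). f (x \<circ> \<sigma>) = f x))"
  then have f: "integrable (unit_cube m) f" and pos: "\<forall>i<m. 0 < \<alpha> i \<and> \<alpha> i < 1"
    and sum: "(\<Sum>i<m. \<alpha> i) = 1" and ne: "\<exists>i<m. \<alpha> i \<noteq> 1 / real m"
    and fs: "\<forall>\<sigma>. \<sigma> permutes {..<m} \<longrightarrow> (\<forall>x\<in>space (unit_cube m). f (x \<circ> \<sigma>) = f x)" by blast+
  show "vanishes_on_disjoint_boxes m \<alpha> f \<longleftrightarrow> (AE x in unit_cube m. f x = 0)"
  proof
    assume v: "vanishes_on_disjoint_boxes m \<alpha> f"
    have m2: "2 \<le> m"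
    proof (rule ccontr)
      assume "\<not> 2 \<le> m"
      then have "m = 0 \<or> m = 1" by linarith
      then show False
      proof
        assume "m = 0" then show False using sum by simp
      next
        assume m1: "m = 1"
        then have "\<alpha> 0 = 1" using sum by simp
        moreover have "\<alpha> 0 < 1" using pos m1 by simp
        ultimately show False by simp
      qed
    qed
    have nc: "\<exists>i<m. \<exists>j<m. \<alpha> i \<noteq> \<alpha> j"
    proof (rule ccontr)
      assume nn: "\<not> (\<exists>i<m. \<exists>j<m. \<alpha> i \<noteq> \<alpha> j)"
      have eq: "\<alpha> i = \<alpha> 0" if "i < m" for i
      proof -
        have "0 < m" using m2 by simp
        then show ?thesis using nn that by blast
      qed
      have "(\<Sum>i<m. \<alpha> i) = (\<Sum>i<m. \<alpha> 0)" by (intro sum.cong refl eq) simp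
      then have "real m * \<alpha> 0 = 1" using sum by simp
      then have a0: "\<alpha> 0 = 1 / real m" using m2 by (simp add: field_simps)
      obtain i where "i < m" "\<alpha> i \<noteq> 1 / real m" using ne by blast
      moreover have "\<alpha> i = \<alpha> 0" using eq \<open>i < m\<close> by blast
      ultimately show False using a0 by simp
    qed
    obtain \<delta> where \<delta>: "\<delta> > 0" "GOOD m \<alpha> \<delta>" using core2[OF m2] pos nc by blast
    have V: "{0..1::real} \<in> sets LL" "lam {0..1} = (\<Sum>i<m. \<alpha> i)" using sum LLp.prob_space by auto
    have van: "\<forall>A. meas m A \<longrightarrow> disj m A \<longrightarrow> (\<forall>i<m. A i \<subseteq> {0..1} \<and> lam (A i) = \<alpha> i) \<longrightarrow> Phi m f A = 0"
      using van_from_def[OF v] by blast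
    have "\<forall>B. meas m B \<longrightarrow> disj m B \<longrightarrow> (\<forall>i<m. B i \<subseteq> {0..1} \<and> lam (B i) \<le> \<delta>) \<longrightarrow> Phi m f B = 0"
      using GOOD_D[OF \<delta>(2) V Phi_ADD[OF f] Phi_CONT[OF f] Phi_SYM[OF fs f] van] by blast
    then have "\<forall>B. meas m B \<longrightarrow> disj m B \<longrightarrow> (\<forall>i<m. lam (B i) \<le> \<delta>) \<longrightarrow> Phi m f B = 0"
    proof (intro allI impI)
      fix B assume G: "\<forall>B. meas m B \<longrightarrow> disj m B \<longrightarrow> (\<forall>i<m. B i \<subseteq> {0..1} \<and> lam (B i) \<le> \<delta>) \<longrightarrow> Phi m f B = 0"
        and B: "meas m B" "disj m B" "\<forall>i<m. lam (B i) \<le> \<delta>"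
      have "\<forall>i<m. B i \<subseteq> {0..1} \<and> lam (B i) \<le> \<delta>"
        using B(1,3) LL_sub unfolding meas_def by blast
      then show "Phi m f B = 0" using G B by blast
    qed
    then show "AE x in unit_cube m. f x = 0" using key_AE[OF f \<delta>(1)] by blast
  next
    assume "AE x in unit_cube m. f x = 0"
    then show "vanishes_on_disjoint_boxes m \<alpha> f" by (rule easy_dir)
  qed
qed


end
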